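(* Let $\lambda\in\mathbb C$ with $\lambda\ne1$ and $\Re(\lambda)>0$, and let $Z$ be a complex random variable with $\mathbb E|Z|<\infty$, $\mathbb EZ\ne0$ and $Z\overset{\mathcal L}{=}e^{-\lambda T}(Z^{(1)}+\dots+Z^{(m)})$, where $Z^{(1)},\dots,Z^{(m)}$ are independent copies of $Z$ independent of $T$. Let $\varphi(t)=\mathbb E e^{i\langle t,Z\rangle}$ ($t\in\mathbb C$) and $\psi(r)=\max_{|t|=r}|\varphi(t)|$ for $r\ge0$. Then $\lim_{r\to+\infty}\psi(r)=0$.
   Context: $m\ge2$ is an integer. $T=\tau_{(1)}+\dots+\tau_{(m-1)}$ where the $\tau_{(j)}$ are independent and $\tau_{(j)}$ is exponential with parameter $j$. For $x,y\in\mathbb C$, $\langle x,y\rangle=\Re(\overline xy)$. *)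

theory Defs
  imports "HOL-Probability.Probability"
begin

definition cinner :: "complex \<Rightarrow> complex \<Rightarrow> real" where
  "cinner x y = Re (cnj x * y)"

end

theory Submission
  imports Defs
begin


definition chf :: "complex measure \<Rightarrow> complex \<Rightarrow> complex" where
  "chf \<mu> t = (LINT z|\<mu>. exp (\<i> * complex_of_real (cinner t z)))"

lemma cinner_eq: "cinner x y = Re x * Re y + Im x * Im y"
  unfolding cinner_def by simp

lemma cinner_meas[measurable]: "(\<lambda>(x,y). cinner x y) \<in> borel_measurable (borel \<Otimes>\<^sub>M borel)"
  unfolding cinner_eq by measurable

lemma meas_exp_cinner[measurable]:
  assumes [measurable]: "f \<in> borel_measurable N" "g \<in> borel_measurable N"
  shows "(\<lambda>x. exp (\<i> * complex_of_real (cinner (f x) (g x)))) \<in> borel_measurable N"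
proof -
  have "(\<lambda>x. cinner (f x) (g x)) \<in> borel_measurable N"
    using measurable_comp[OF measurable_Pair[OF assms] cinner_meas] by (simp add: o_def)
  then show ?thesis by measurable
qed

lemma cinner_meas2[measurable]:
  assumes [measurable]: "f \<in> borel_measurable N" "g \<in> borel_measurable N"
  shows "(\<lambda>x. cinner (f x) (g x)) \<in> borel_measurable N"
  unfolding cinner_eq by measurable

lemma meas_pair_cong:
  assumes "sets A = sets borel" "sets B = sets borel"
    and "f \<in> borel_measurable (borel \<Otimes>\<^sub>M borel)"
  shows "f \<in> borel_measurable (A \<Otimes>\<^sub>M B)"
proof -
  have s: "sets (A \<Otimes>\<^sub>M B) = sets (borel \<Otimes>\<^sub>M borel)"
    using assms by (intro sets_pair_measure_cong) auto
  show ?thesis unfolding measurable_cong_sets[OF s refl] by (rule assms(3))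
qed

lemma meas_pair_cong3:
  assumes "sets A = sets borel" "sets B = sets borel" "sets C = sets borel"
    and "f \<in> borel_measurable ((borel \<Otimes>\<^sub>M borel) \<Otimes>\<^sub>M borel)"
  shows "f \<in> borel_measurable ((A \<Otimes>\<^sub>M B) \<Otimes>\<^sub>M C)"
proof -
  have s: "sets ((A \<Otimes>\<^sub>M B) \<Otimes>\<^sub>M C) = sets ((borel \<Otimes>\<^sub>M borel) \<Otimes>\<^sub>M borel)"
    using assms by (intro sets_pair_measure_cong) auto
  show ?thesis unfolding measurable_cong_sets[OF s refl] by (rule assms(4))
qed

lemma norm_exp_i: "cmod (exp (\<i> * complex_of_real x)) = 1"
  by (simp add: norm_exp_i_times)

lemma chf_integrable:
  assumes "prob_space \<mu>" "sets \<mu> = sets borel"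
  shows "integrable \<mu> (\<lambda>z. exp (\<i> * complex_of_real (cinner t z)))"
proof -
  interpret prob_space \<mu> by fact
  show ?thesis
    by (rule integrable_const_bound[where B=1]) (auto simp: norm_exp_i measurable_cong_sets[OF assms(2) refl])
qed

lemma chf_le1:
  assumes "prob_space \<mu>" "sets \<mu> = sets borel"
  shows "cmod (chf \<mu> t) \<le> 1"
proof -
  interpret prob_space \<mu> by fact
  have "cmod (chf \<mu> t) \<le> (LINT z|\<mu>. cmod (exp (\<i> * complex_of_real (cinner t z))))"
    unfolding chf_def by (rule integral_norm_bound)
  also have "\<dots> = 1" by (simp add: norm_exp_i prob_space)
  finally show ?thesis .
qed

lemma chf_meas:
  assumes "prob_space \<mu>" "sets \<mu> = sets borel" and [measurable]: "f \<in> borel_measurable N"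
  shows "(\<lambda>s. chf \<mu> (f s)) \<in> borel_measurable N"
proof -
  interpret prob_space \<mu> by fact
  have m: "(\<lambda>(s,z). exp (\<i> * complex_of_real (cinner (f s) z))) \<in> borel_measurable (N \<Otimes>\<^sub>M \<mu>)"
    unfolding case_prod_beta using assms(2) by (intro meas_exp_cinner) (auto intro: measurable_compose[OF measurable_fst])
  show ?thesis unfolding chf_def
    by (rule borel_measurable_lebesgue_integral[OF m])
qed

definition psit :: "complex measure \<Rightarrow> real \<Rightarrow> real" where
  "psit \<mu> r = Sup {cmod (chf \<mu> t) | t. r \<le> cmod t}"

context
  fixes \<mu> :: "complex measure"
  assumes mu: "prob_space \<mu>" "sets \<mu> = sets borel"
begin

lemma psit_ne: "{cmod (chf \<mu> t) | t. r \<le> cmod t} \<noteq> {}"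
proof -
  have "r \<le> cmod (complex_of_real \<bar>r\<bar>)" by simp
  then show ?thesis by blast
qed

lemma psit_bdd: "bdd_above {cmod (chf \<mu> t) | t. r \<le> cmod t}"
  using chf_le1[OF mu] by (auto intro!: bdd_aboveI[where M=1])

lemma psit_upper: "r \<le> cmod t \<Longrightarrow> cmod (chf \<mu> t) \<le> psit \<mu> r"
  unfolding psit_def by (rule cSup_upper[OF _ psit_bdd]) blast

lemma psit_le1: "psit \<mu> r \<le> 1"
  unfolding psit_def using chf_le1[OF mu] by (intro cSup_least[OF psit_ne]) auto

lemma psit_nonneg: "0 \<le> psit \<mu> r"
proof -
  have "r \<le> cmod (complex_of_real \<bar>r\<bar>)" by simp
  from psit_upper[OF this] show ?thesis by (meson norm_ge_zero order_trans)
qed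

lemma psit_antimono: "r1 \<le> r2 \<Longrightarrow> psit \<mu> r2 \<le> psit \<mu> r1"
  unfolding psit_def by (rule cSup_subset_mono[OF psit_ne psit_bdd]) auto

lemma psit_meas[measurable]: "psit \<mu> \<in> borel_measurable borel"
proof -
  have "mono (\<lambda>r. - psit \<mu> r)" by (auto intro!: monoI psit_antimono)
  from borel_measurable_mono[OF this] have "(\<lambda>r. - (- psit \<mu> r)) \<in> borel_measurable borel"
    by measurable
  then show ?thesis by simp
qed

lemma cmod_rot: "cmod (exp (- cnj lam * complex_of_real s) * t) = exp (- Re lam * s) * cmod t"
  by (simp add: norm_mult)

lemma step_ineq:
  assumes P: "prob_space P" "sets P = sets borel"
    and H1: "\<And>t. cmod (chf \<mu> t) \<le> (LINT s|P. cmod (chf \<mu> (exp (- cnj lam * complex_of_real s) * t)) ^ m)"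
  shows "psit \<mu> r \<le> (LINT s|P. psit \<mu> (r * exp (- Re lam * s)) ^ m)"
proof -
  interpret P: prob_space P by fact
  have mP: "borel_measurable P = borel_measurable borel"
    by (rule measurable_cong_sets[OF P(2) refl])
  show ?thesis unfolding psit_def[of _ r]
  proof (rule cSup_least[OF psit_ne], safe)
    fix t assume rt: "r \<le> cmod t"
    have m1: "(\<lambda>s. chf \<mu> (exp (- cnj lam * complex_of_real s) * t)) \<in> borel_measurable P"
      by (rule chf_meas[OF mu]) (unfold mP, measurable)
    have "cmod (chf \<mu> t) \<le> (LINT s|P. cmod (chf \<mu> (exp (- cnj lam * complex_of_real s) * t)) ^ m)"
      by (rule H1)
    also have "\<dots> \<le> (LINT s|P. psit \<mu> (r * exp (- Re lam * s)) ^ m)"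
    proof (rule integral_mono)
      show "integrable P (\<lambda>s. cmod (chf \<mu> (exp (- cnj lam * complex_of_real s) * t)) ^ m)"
      proof (rule P.integrable_const_bound[where B=1])
        show "AE x in P. norm (cmod (chf \<mu> (exp (- cnj lam * complex_of_real x) * t)) ^ m) \<le> 1"
          using chf_le1[OF mu] by (simp add: power_le_one norm_power)
      qed (use m1 in simp)
      show "integrable P (\<lambda>s. psit \<mu> (r * exp (- Re lam * s)) ^ m)"
      proof (rule P.integrable_const_bound[where B=1])
        show "AE x in P. norm (psit \<mu> (r * exp (- Re lam * x)) ^ m) \<le> 1"
          using psit_le1 psit_nonneg by (simp add: power_le_one norm_power)
      qed (unfold mP, measurable)
      fix s
      have "r * exp (- Re lam * s) \<le> cmod (exp (- cnj lam * complex_of_real s) * t)"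
        unfolding cmod_rot using rt by (simp add: mult.commute)
      then have "cmod (chf \<mu> (exp (- cnj lam * complex_of_real s) * t)) \<le> psit \<mu> (r * exp (- Re lam * s))"
        by (rule psit_upper)
      then show "cmod (chf \<mu> (exp (- cnj lam * complex_of_real s) * t)) ^ m \<le> psit \<mu> (r * exp (- Re lam * s)) ^ m"
        by (simp add: power_mono)
    qed
    finally show "cmod (chf \<mu> t) \<le> (LINT s|P. psit \<mu> (r * exp (- Re lam * s)) ^ m)" .
  qed
qed


lemma psit_lim: "(psit \<mu> \<longlongrightarrow> Inf (range (psit \<mu>))) at_top"
proof (rule order_tendstoI)
  have bdd: "bdd_below (range (psit \<mu>))" using psit_nonneg by (auto intro!: bdd_belowI)
  fix y assume "y < Inf (range (psit \<mu>))"
  then show "\<forall>\<^sub>F x in at_top. y < psit \<mu> x"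
    using cInf_lower[OF _ bdd] by (auto intro!: always_eventually) (meson order_less_le_trans rangeI)
next
  fix y assume "Inf (range (psit \<mu>)) < y"
  then obtain r0 where "psit \<mu> r0 < y" using cInf_lessD[of "range (psit \<mu>)"] by auto
  have "\<forall>\<^sub>F x in at_top. r0 \<le> x" by (rule eventually_ge_at_top)
  then show "\<forall>\<^sub>F x in at_top. psit \<mu> x < y"
    by eventually_elim (meson \<open>psit \<mu> r0 < y\<close> order_le_less_trans psit_antimono)
qed

lemma dichotomy:
  assumes P: "prob_space P" "sets P = sets borel"
    and H1: "\<And>t. cmod (chf \<mu> t) \<le> (LINT s|P. cmod (chf \<mu> (exp (- cnj lam * complex_of_real s) * t)) ^ m)"
    and m: "m \<ge> 2" and a: "Re lam > 0"
  shows "Inf (range (psit \<mu>)) = 0 \<or> (\<forall>r. psit \<mu> r = 1)"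
proof -
  interpret P: prob_space P by fact
  have mP: "borel_measurable P = borel_measurable borel"
    by (rule measurable_cong_sets[OF P(2) refl])
  define L where "L = Inf (range (psit \<mu>))"
  have bdd: "bdd_below (range (psit \<mu>))" using psit_nonneg by (auto intro!: bdd_belowI)
  have Lle: "\<And>r. L \<le> psit \<mu> r" unfolding L_def by (rule cInf_lower[OF _ bdd]) auto
  have L0: "0 \<le> L" unfolding L_def using psit_nonneg by (auto intro!: cInf_greatest)
  have L1: "L \<le> 1" using Lle[of 0] psit_le1[of 0] by linarith
  have conv: "(\<lambda>n. psit \<mu> (real n * exp (- Re lam * s)) ^ m) \<longlonglongrightarrow> L ^ m" for s
  proof -
    have "filterlim (\<lambda>n. exp (- Re lam * s) * real n) at_top sequentially"
      by (rule filterlim_tendsto_pos_mult_at_top[OF tendsto_const]) (auto simp: filterlim_real_sequentially)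
    then have "filterlim (\<lambda>n. real n * exp (- Re lam * s)) at_top sequentially"
      by (simp add: mult.commute)
    from filterlim_compose[OF psit_lim[unfolded L_def[symmetric]] this]
    show ?thesis by (intro tendsto_intros)
  qed
  have "(\<lambda>n. LINT s|P. psit \<mu> (real n * exp (- Re lam * s)) ^ m) \<longlonglongrightarrow> (LINT s|P. L ^ m)"
  proof (rule integral_dominated_convergence[where w="\<lambda>_. 1"])
    show "AE x in P. (\<lambda>i. psit \<mu> (real i * exp (- Re lam * x)) ^ m) \<longlonglongrightarrow> L ^ m"
      using conv by simp
    show "AE x in P. norm (psit \<mu> (real i * exp (- Re lam * x)) ^ m) \<le> 1" for i
      using psit_le1 psit_nonneg by (simp add: power_le_one norm_power)
  qed (auto simp: mP)
  then have lim: "(\<lambda>n. LINT s|P. psit \<mu> (real n * exp (- Re lam * s)) ^ m) \<longlonglongrightarrow> L ^ m"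
    by (simp add: P.prob_space)
  have "L \<le> L ^ m"
  proof (rule LIMSEQ_le_const[OF lim], intro exI allI impI)
    fix n :: nat
    show "L \<le> (LINT s|P. psit \<mu> (real n * exp (- Re lam * s)) ^ m)"
      using Lle[of "real n"] step_ineq[OF P H1, of "real n"] by linarith
  qed
  show ?thesis
  proof (cases "L = 0")
    case True then show ?thesis unfolding L_def by simp
  next
    case False
    then have Lp: "0 < L" using L0 by simp
    have "L = 1"
    proof (rule ccontr)
      assume "L \<noteq> 1"
      then have "L < 1" using L1 by simp
      have "L ^ m \<le> L ^ 2" by (rule power_decreasing) (use m L0 L1 in auto)
      also have "\<dots> < L" using Lp \<open>L < 1\<close> by (simp add: power2_eq_square)
      finally show False using \<open>L \<le> L ^ m\<close> by simp
    qed
    then show ?thesis using Lle psit_le1 by (auto intro: antisym)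
  qed
qed


lemma cinner_diff: "cinner v z - cinner v z' = cinner v (z - z')"
  unfolding cinner_eq by (simp add: algebra_simps)

lemma defect_eq:
  "1 - cmod (chf \<mu> v) ^ 2 = (LINT z|\<mu>. LINT z'|\<mu>. 1 - cos (cinner v (z - z')))"
proof -
  interpret prob_space \<mu> by (rule mu)
  have mmu: "borel_measurable \<mu> = borel_measurable borel"
    by (rule measurable_cong_sets[OF mu(2) refl])
  define e where "e z = exp (\<i> * complex_of_real (cinner v z))" for z
  have ie: "integrable \<mu> e" unfolding e_def by (rule chf_integrable[OF mu])
  have iec: "integrable \<mu> (\<lambda>z. cnj (e z))" using ie by simp
  have prod: "e z * cnj (e z') = exp (\<i> * complex_of_real (cinner v (z - z')))" for z z'
    unfolding e_def cinner_diff[symmetric] by (simp add: exp_cnj exp_add[symmetric] algebra_simps)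
  have mF: "(\<lambda>(z, z'). exp (\<i> * complex_of_real (cinner v (z - z')))) \<in> borel_measurable (\<mu> \<Otimes>\<^sub>M \<mu>)"
  proof -
    have "(\<lambda>p::complex\<times>complex. exp (\<i> * complex_of_real (cinner v (fst p - snd p)))) \<in> borel_measurable (borel \<Otimes>\<^sub>M borel)"
      by (intro meas_exp_cinner) measurable
    moreover have s: "sets (\<mu> \<Otimes>\<^sub>M \<mu>) = sets (borel \<Otimes>\<^sub>M borel)"
      using mu(2) by (intro sets_pair_measure_cong) auto
    ultimately show ?thesis unfolding measurable_cong_sets[OF s refl] by (simp add: case_prod_beta)
  qed
  have iF: "integrable \<mu> (\<lambda>z'. exp (\<i> * complex_of_real (cinner v (z - z'))))" for z
    by (rule integrable_const_bound[where B=1]) (auto simp: norm_exp_i mmu)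
  have mI: "(\<lambda>z. LINT z'|\<mu>. exp (\<i> * complex_of_real (cinner v (z - z')))) \<in> borel_measurable \<mu>"
    using borel_measurable_lebesgue_integral[OF mF] by simp
  have iI: "integrable \<mu> (\<lambda>z. LINT z'|\<mu>. exp (\<i> * complex_of_real (cinner v (z - z'))))"
  proof (rule integrable_const_bound[where B=1])
    show "AE x in \<mu>. norm (LINT z'|\<mu>. exp (\<i> * complex_of_real (cinner v (x - z')))) \<le> 1"
      by (intro AE_I2 order_trans[OF integral_norm_bound]) (simp add: norm_exp_i)
  qed (rule mI)
  have "complex_of_real (cmod (chf \<mu> v) ^ 2) = chf \<mu> v * cnj (chf \<mu> v)"
    by (rule complex_norm_square)
  also have "\<dots> = (LINT z|\<mu>. e z) * (LINT z'|\<mu>. cnj (e z'))"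
    unfolding chf_def e_def by (simp add: integral_cnj)
  also have "\<dots> = (LINT z|\<mu>. e z * (LINT z'|\<mu>. cnj (e z')))"
    by simp
  also have "\<dots> = (LINT z|\<mu>. LINT z'|\<mu>. exp (\<i> * complex_of_real (cinner v (z - z'))))"
    by (simp add: prod[symmetric])
  finally have eq: "cmod (chf \<mu> v) ^ 2 = Re (LINT z|\<mu>. LINT z'|\<mu>. exp (\<i> * complex_of_real (cinner v (z - z'))))"
    by (metis Re_complex_of_real)
  also have "\<dots> = (LINT z|\<mu>. Re (LINT z'|\<mu>. exp (\<i> * complex_of_real (cinner v (z - z')))))"
    by (rule integral_Re[symmetric, OF iI])
  also have "\<dots> = (LINT z|\<mu>. LINT z'|\<mu>. cos (cinner v (z - z')))"
    by (rule Bochner_Integration.integral_cong[OF refl]) (simp add: integral_Re[symmetric, OF iF] Re_exp)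
  finally have eq2: "cmod (chf \<mu> v) ^ 2 = (LINT z|\<mu>. LINT z'|\<mu>. cos (cinner v (z - z')))" .
  have icos: "integrable \<mu> (\<lambda>z'. cos (cinner v (z - z')))" for z
    by (rule integrable_const_bound[where B=1]) (auto simp: mmu)
  have icos2: "integrable \<mu> (\<lambda>z. LINT z'|\<mu>. cos (cinner v (z - z')))"
  proof (rule integrable_const_bound[where B=1])
    show "AE x in \<mu>. norm (LINT z'|\<mu>. cos (cinner v (x - z'))) \<le> 1"
      by (intro AE_I2 order_trans[OF integral_norm_bound] integral_le_const) (auto intro!: integrable_const_bound[where B=1] simp: mmu)
    have "(\<lambda>(z,z'). cos (cinner v (z - z'))) \<in> borel_measurable (\<mu> \<Otimes>\<^sub>M \<mu>)"
    proof -
      have "(\<lambda>p::complex\<times>complex. cos (cinner v (fst p - snd p))) \<in> borel_measurable (borel \<Otimes>\<^sub>M borel)"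
        unfolding cinner_eq by measurable
      moreover have s: "sets (\<mu> \<Otimes>\<^sub>M \<mu>) = sets (borel \<Otimes>\<^sub>M borel)"
        using mu(2) by (intro sets_pair_measure_cong) auto
      ultimately show ?thesis unfolding measurable_cong_sets[OF s refl] by (simp add: case_prod_beta)
    qed
    then show "(\<lambda>z. LINT z'|\<mu>. cos (cinner v (z - z'))) \<in> borel_measurable \<mu>"
      using borel_measurable_lebesgue_integral by fastforce
  qed
  have "(LINT z|\<mu>. LINT z'|\<mu>. 1 - cos (cinner v (z - z'))) = (LINT z|\<mu>. 1 - (LINT z'|\<mu>. cos (cinner v (z - z'))))"
    by (rule Bochner_Integration.integral_cong[OF refl]) (simp add: Bochner_Integration.integral_diff[OF _ icos] prob_space)
  also have "\<dots> = 1 - (LINT z|\<mu>. LINT z'|\<mu>. cos (cinner v (z - z')))"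
    by (simp add: Bochner_Integration.integral_diff[OF _ icos2] prob_space)
  finally show ?thesis using eq2 by simp
qed


lemma defect_nn:
  "ennreal (1 - cmod (chf \<mu> v) ^ 2) = (\<integral>\<^sup>+ z. \<integral>\<^sup>+ z'. ennreal (1 - cos (cinner v (z - z'))) \<partial>\<mu> \<partial>\<mu>)"
proof -
  interpret prob_space \<mu> by (rule mu)
  have mmu: "borel_measurable \<mu> = borel_measurable borel"
    by (rule measurable_cong_sets[OF mu(2) refl])
  have mF: "(\<lambda>(z,z'). 1 - cos (cinner v (z - z'))) \<in> borel_measurable (\<mu> \<Otimes>\<^sub>M \<mu>)"
    by (rule meas_pair_cong[OF mu(2) mu(2)]) (simp add: case_prod_beta)
  have i1: "integrable \<mu> (\<lambda>z'. 1 - cos (cinner v (z - z')))" for z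
    by (rule integrable_const_bound[where B=2]) (auto simp: mmu)
  have inner: "(\<integral>\<^sup>+ z'. ennreal (1 - cos (cinner v (z - z'))) \<partial>\<mu>) = ennreal (LINT z'|\<mu>. 1 - cos (cinner v (z - z')))" for z
    by (rule nn_integral_eq_integral[OF i1]) auto
  have mI: "(\<lambda>z. LINT z'|\<mu>. 1 - cos (cinner v (z - z'))) \<in> borel_measurable \<mu>"
    using borel_measurable_lebesgue_integral[OF mF] by simp
  have i2: "integrable \<mu> (\<lambda>z. LINT z'|\<mu>. 1 - cos (cinner v (z - z')))"
  proof (rule integrable_const_bound[where B=2])
    show "AE x in \<mu>. norm (LINT z'|\<mu>. 1 - cos (cinner v (x - z'))) \<le> 2"
      by (intro AE_I2 order_trans[OF integral_norm_bound] integral_le_const) (auto intro!: integrable_const_bound[where B=2] simp: mmu)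
  qed (rule mI)
  have "(\<integral>\<^sup>+ z. \<integral>\<^sup>+ z'. ennreal (1 - cos (cinner v (z - z'))) \<partial>\<mu> \<partial>\<mu>) = (\<integral>\<^sup>+ z. ennreal (LINT z'|\<mu>. 1 - cos (cinner v (z - z'))) \<partial>\<mu>)"
    by (simp add: inner)
  also have "\<dots> = ennreal (LINT z|\<mu>. LINT z'|\<mu>. 1 - cos (cinner v (z - z')))"
    by (rule nn_integral_eq_integral[OF i2]) (auto intro!: AE_I2 integral_nonneg_AE)
  finally show ?thesis by (simp add: defect_eq)
qed


lemma dirac:
  assumes P: "prob_space P" "sets P = sets borel"
    and H1: "\<And>t. cmod (chf \<mu> t) \<le> (LINT s|P. cmod (chf \<mu> (exp (- cnj lam * complex_of_real s) * t)) ^ m)"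
    and m: "m \<ge> 2"
    and kap: "\<kappa> > 0"
    and H2: "\<And>c. R0 \<le> cmod c \<Longrightarrow> ennreal \<kappa> \<le> (\<integral>\<^sup>+ s. ennreal (1 - cos (Re (c * exp (- lam * complex_of_real s)))) \<partial>P)"
    and all1: "\<And>r. psit \<mu> r = 1"
  shows "\<exists>c. AE z in \<mu>. z = c"
proof -
  interpret P: prob_space P by fact
  interpret U: prob_space \<mu> by (rule mu)
  have mP: "borel_measurable P = borel_measurable borel"
    by (rule measurable_cong_sets[OF P(2) refl])
  have mmu: "borel_measurable \<mu> = borel_measurable borel"
    by (rule measurable_cong_sets[OF mu(2) refl])
  have "\<exists>t. real n \<le> cmod t \<and> 1 - 1 / real (Suc n) < cmod (chf \<mu> t)" for n
  proof -
    have "1 - 1 / real (Suc n) < Sup {cmod (chf \<mu> t) | t. real n \<le> cmod t}"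
      using all1[of "real n"] unfolding psit_def by simp
    then show ?thesis by (rule less_cSupE[OF _ psit_ne]) blast
  qed
  then obtain t where tn: "\<And>n. real n \<le> cmod (t n)" and tp: "\<And>n. 1 - 1 / real (Suc n) < cmod (chf \<mu> (t n))"
    by metis
  define v where "v n s = exp (- cnj lam * complex_of_real s) * t n" for n s
  define F where "F n s z z' = ennreal (1 - cos (cinner (v n s) (z - z')))" for n s z z'
  have Fm1: "(\<lambda>p. F n (snd (fst p)) (fst (fst p)) (snd p)) \<in> borel_measurable ((\<mu> \<Otimes>\<^sub>M P) \<Otimes>\<^sub>M \<mu>)" for n
  proof (rule meas_pair_cong3[OF mu(2) P(2) mu(2)])
    show "(\<lambda>p. F n (snd (fst p)) (fst (fst p)) (snd p)) \<in> borel_measurable ((borel \<Otimes>\<^sub>M borel) \<Otimes>\<^sub>M borel)"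
      unfolding F_def v_def by measurable
  qed
  have Fm2: "(\<lambda>p. F n (snd p) z (fst p)) \<in> borel_measurable (\<mu> \<Otimes>\<^sub>M P)" for n z
  proof (rule meas_pair_cong[OF mu(2) P(2)])
    show "(\<lambda>p. F n (snd p) z (fst p)) \<in> borel_measurable (borel \<Otimes>\<^sub>M borel)"
      unfolding F_def v_def by measurable
  qed
  have Fm3: "(\<lambda>p. F n (snd p) (fst (fst p)) (snd (fst p))) \<in> borel_measurable ((\<mu> \<Otimes>\<^sub>M \<mu>) \<Otimes>\<^sub>M P)" for n
  proof (rule meas_pair_cong3[OF mu(2) mu(2) P(2)])
    show "(\<lambda>p. F n (snd p) (fst (fst p)) (snd (fst p))) \<in> borel_measurable ((borel \<Otimes>\<^sub>M borel) \<Otimes>\<^sub>M borel)"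
      unfolding F_def v_def by measurable
  qed
  note Fm = Fm1 Fm2 Fm3
  have mv: "(\<lambda>s. chf \<mu> (v n s)) \<in> borel_measurable P" for n
    unfolding v_def by (rule chf_meas[OF mu]) (unfold mP, measurable)
  note mv[measurable]
  have intD: "(LINT s|P. 1 - cmod (chf \<mu> (v n s)) ^ 2) < 1 / real (Suc n)" for n
  proof -
    have iA: "integrable P (\<lambda>s. cmod (chf \<mu> (v n s)) ^ k)" for k
    proof (rule P.integrable_const_bound[where B=1])
      show "AE x in P. norm (cmod (chf \<mu> (v n x)) ^ k) \<le> 1"
        using chf_le1[OF mu] by (simp add: power_le_one norm_power)
    qed measurable
    have "cmod (chf \<mu> (t n)) \<le> (LINT s|P. cmod (chf \<mu> (v n s)) ^ m)"
      using H1 unfolding v_def .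
    also have "\<dots> \<le> (LINT s|P. cmod (chf \<mu> (v n s)) ^ 2)"
      by (intro integral_mono iA power_decreasing) (use m chf_le1[OF mu] in auto)
    finally have "cmod (chf \<mu> (t n)) \<le> (LINT s|P. cmod (chf \<mu> (v n s)) ^ 2)" .
    moreover have "(LINT s|P. 1 - cmod (chf \<mu> (v n s)) ^ 2) = 1 - (LINT s|P. cmod (chf \<mu> (v n s)) ^ 2)"
      by (simp add: Bochner_Integration.integral_diff[OF _ iA] P.prob_space)
    ultimately show ?thesis using tp[of n] by linarith
  qed
  have nnD: "(\<integral>\<^sup>+ s. \<integral>\<^sup>+ z. \<integral>\<^sup>+ z'. F n s z z' \<partial>\<mu> \<partial>\<mu> \<partial>P) \<le> ennreal (1 / real (Suc n))" for n
  proof -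
    have iD: "integrable P (\<lambda>s. 1 - cmod (chf \<mu> (v n s)) ^ 2)"
    proof (rule P.integrable_const_bound[where B=1])
      show "AE x in P. norm (1 - cmod (chf \<mu> (v n x)) ^ 2) \<le> 1"
        using chf_le1[OF mu] by (auto intro!: AE_I2 simp: power_le_one abs_le_iff)
    qed measurable
    have "(\<integral>\<^sup>+ s. \<integral>\<^sup>+ z. \<integral>\<^sup>+ z'. F n s z z' \<partial>\<mu> \<partial>\<mu> \<partial>P) = (\<integral>\<^sup>+ s. ennreal (1 - cmod (chf \<mu> (v n s)) ^ 2) \<partial>P)"
      unfolding F_def by (simp add: defect_nn)
    also have "\<dots> = ennreal (LINT s|P. 1 - cmod (chf \<mu> (v n s)) ^ 2)"
      by (rule nn_integral_eq_integral[OF iD]) (use chf_le1[OF mu] in \<open>auto simp: power_le_one\<close>)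
    also have "\<dots> \<le> ennreal (1 / real (Suc n))"
      using intD[of n] by (intro ennreal_leI) simp
    finally show ?thesis .
  qed
  have pq: "pair_sigma_finite \<mu> P"
    by (simp add: pair_sigma_finite_def prob_space_imp_sigma_finite mu P)
  have sfmu: "sigma_finite_measure \<mu>" by (simp add: prob_space_imp_sigma_finite mu)
  have sfP: "sigma_finite_measure P" by (simp add: prob_space_imp_sigma_finite P)
  define g where "g n z z' = (\<integral>\<^sup>+ s. F n s z z' \<partial>P)" for n z z'
  define u where "u n z = (\<integral>\<^sup>+ z'. g n z z' \<partial>\<mu>)" for n z
  have swap: "(\<integral>\<^sup>+ s. \<integral>\<^sup>+ z. \<integral>\<^sup>+ z'. F n s z z' \<partial>\<mu> \<partial>\<mu> \<partial>P) = (\<integral>\<^sup>+ z. u n z \<partial>\<mu>)" for n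
  proof -
    have "(\<integral>\<^sup>+ s. \<integral>\<^sup>+ z. \<integral>\<^sup>+ z'. F n s z z' \<partial>\<mu> \<partial>\<mu> \<partial>P) = (\<integral>\<^sup>+ z. \<integral>\<^sup>+ s. \<integral>\<^sup>+ z'. F n s z z' \<partial>\<mu> \<partial>P \<partial>\<mu>)"
    proof (rule pair_sigma_finite.Fubini'[OF pq])
      show "(\<lambda>(x, y). \<integral>\<^sup>+ z'. F n y x z' \<partial>\<mu>) \<in> borel_measurable (\<mu> \<Otimes>\<^sub>M P)"
        using sigma_finite_measure.borel_measurable_nn_integral[OF sfmu, of "\<lambda>x y. F n (snd x) (fst x) y" "\<mu> \<Otimes>\<^sub>M P"] Fm(1)
        by (simp add: case_prod_beta)
    qed
    also have "\<dots> = (\<integral>\<^sup>+ z. \<integral>\<^sup>+ z'. \<integral>\<^sup>+ s. F n s z z' \<partial>P \<partial>\<mu> \<partial>\<mu>)"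
    proof (rule nn_integral_cong, rule pair_sigma_finite.Fubini'[OF pq])
      fix z show "(\<lambda>(x, y). F n y z x) \<in> borel_measurable (\<mu> \<Otimes>\<^sub>M P)"
        using Fm(2)[of n z] by (simp add: case_prod_beta)
    qed
    finally show ?thesis unfolding u_def g_def .
  qed
  have mg: "(\<lambda>(z,z'). g n z z') \<in> borel_measurable (\<mu> \<Otimes>\<^sub>M \<mu>)" for n
    unfolding g_def
    using sigma_finite_measure.borel_measurable_nn_integral[OF sfP, of "\<lambda>x y. F n y (fst x) (snd x)" "\<mu> \<Otimes>\<^sub>M \<mu>"] Fm(3)
    by (simp add: case_prod_beta)
  have mu_m: "u n \<in> borel_measurable \<mu>" for n
    unfolding u_def
    using sigma_finite_measure.borel_measurable_nn_integral[OF sfmu, of "\<lambda>x y. g n x y" \<mu>] mg[of n] by simp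
  have mg2: "(\<lambda>z'. g n z z') \<in> borel_measurable \<mu>" if "z \<in> space \<mu>" for n z
    using measurable_Pair2[OF mg[of n] that] by simp
  have lim0: "liminf (\<lambda>n. ennreal (1 / real (Suc n))) = 0"
  proof (rule lim_imp_Liminf[OF trivial_limit_sequentially])
    have "(\<lambda>n. 1 / real (Suc n)) \<longlonglongrightarrow> 0"
      using LIMSEQ_inverse_real_of_nat by (simp add: inverse_eq_divide)
    then show "(\<lambda>n. ennreal (1 / real (Suc n))) \<longlonglongrightarrow> 0"
      using tendsto_ennrealI by fastforce
  qed
  have "(\<integral>\<^sup>+ z. liminf (\<lambda>n. u n z) \<partial>\<mu>) \<le> liminf (\<lambda>n. \<integral>\<^sup>+ z. u n z \<partial>\<mu>)"
    by (rule nn_integral_liminf[OF mu_m])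
  also have "\<dots> \<le> liminf (\<lambda>n. ennreal (1 / real (Suc n)))"
    by (intro Liminf_mono always_eventually allI) (metis nnD swap)
  finally have "(\<integral>\<^sup>+ z. liminf (\<lambda>n. u n z) \<partial>\<mu>) = 0" using lim0 by simp
  then have AE1: "AE z in \<mu>. liminf (\<lambda>n. u n z) = 0"
    by (subst (asm) nn_integral_0_iff_AE) (use mu_m in measurable)
  have AE2: "AE z' in \<mu>. z' = z" if z: "z \<in> space \<mu>" "liminf (\<lambda>n. u n z) = 0" for z
  proof -
    have "(\<integral>\<^sup>+ z'. liminf (\<lambda>n. g n z z') \<partial>\<mu>) \<le> liminf (\<lambda>n. u n z)"
      unfolding u_def by (rule nn_integral_liminf[OF mg2[OF z(1)]])
    then have "(\<integral>\<^sup>+ z'. liminf (\<lambda>n. g n z z') \<partial>\<mu>) = 0" using z(2) by simp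
    then have "AE z' in \<mu>. liminf (\<lambda>n. g n z z') = 0"
      by (subst (asm) nn_integral_0_iff_AE) (use mg2[OF z(1)] in measurable)
    then show ?thesis
    proof (rule AE_mp, intro AE_I2 impI)
      fix z' assume lz: "liminf (\<lambda>n. g n z z') = 0"
      show "z' = z"
      proof (rule ccontr)
        assume "z' \<noteq> z"
        then have dpos: "0 < cmod (z - z')" by simp
        obtain N :: nat where N: "R0 / cmod (z - z') \<le> real N" by (meson real_arch_simple)
        have "\<forall>\<^sub>F n in sequentially. ennreal \<kappa> \<le> g n z z'"
        proof (rule eventually_sequentiallyI[of N])
          fix n assume "N \<le> n"
          then have "R0 / cmod (z - z') \<le> real n" using N by linarith
          then have "R0 \<le> real n * cmod (z - z')" using dpos by (simp only: divide_le_eq)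
          also have "\<dots> \<le> cmod (t n) * cmod (z - z')" using tn[of n] dpos by (intro mult_right_mono) auto
          also have "\<dots> = cmod (cnj (t n) * (z - z'))" by (simp only: norm_mult complex_mod_cnj)
          finally have R: "R0 \<le> cmod (cnj (t n) * (z - z'))" .
          have eqs: "cinner (v n s) (z - z') = Re (cnj (t n) * (z - z') * exp (- lam * complex_of_real s))" for s
          proof -
            have "cnj (v n s) = exp (- lam * complex_of_real s) * cnj (t n)"
              unfolding v_def by (simp add: exp_cnj)
            then show ?thesis unfolding cinner_def by (simp only: mult.commute mult.left_commute)
          qed
          from H2[OF R]
          show "ennreal \<kappa> \<le> g n z z'"
            unfolding g_def F_def eqs .
        qed
        then have "ennreal \<kappa> \<le> liminf (\<lambda>n. g n z z')" by (rule Liminf_bounded)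
        then show False using lz kap by simp
      qed
    qed
  qed
  obtain z where "z \<in> space \<mu>" "liminf (\<lambda>n. u n z) = 0"
  proof -
    have "\<not> (AE z in \<mu>. False)" by (simp add: U.AE_False)
    moreover have "AE z in \<mu>. z \<in> space \<mu> \<and> liminf (\<lambda>n. u n z) = 0" using AE1 by (intro AE_conjI AE_space)
    ultimately have "\<exists>z. z \<in> space \<mu> \<and> liminf (\<lambda>n. u n z) = 0"
      by (rule_tac ccontr) (auto elim: AE_mp)
    then show ?thesis using that by blast
  qed
  then show ?thesis using AE2 by blast
qed


lemma abstract_main:
  assumes P: "prob_space P" "sets P = sets borel"
    and H1: "\<And>t. cmod (chf \<mu> t) \<le> (LINT s|P. cmod (chf \<mu> (exp (- cnj lam * complex_of_real s) * t)) ^ m)"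
    and m: "m \<ge> 2" and a: "Re lam > 0"
    and kap: "\<kappa> > 0"
    and H2: "\<And>c. R0 \<le> cmod c \<Longrightarrow> ennreal \<kappa> \<le> (\<integral>\<^sup>+ s. ennreal (1 - cos (Re (c * exp (- lam * complex_of_real s)))) \<partial>P)"
    and H3: "\<not> (\<exists>c. AE z in \<mu>. z = c)"
  shows "((\<lambda>r. Sup {cmod (chf \<mu> t) | t. cmod t = r}) \<longlongrightarrow> 0) at_top"
proof -
  have "Inf (range (psit \<mu>)) = 0"
    using dichotomy[OF P H1 m a] dirac[OF P H1 m kap H2] H3 by blast
  then have lim: "(psit \<mu> \<longlongrightarrow> 0) at_top" using psit_lim by simp
  show ?thesis
  proof (rule tendsto_sandwich[OF _ _ tendsto_const lim])
    have "\<forall>\<^sub>F r in at_top. (0::real) \<le> r" by (rule eventually_ge_at_top)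
    then show "\<forall>\<^sub>F r in at_top. 0 \<le> Sup {cmod (chf \<mu> t) | t. cmod t = r}"
    proof eventually_elim
      fix r :: real assume r: "0 \<le> r"
      have bdd: "bdd_above {cmod (chf \<mu> t) | t. cmod t = r}"
        using chf_le1[OF mu] by (auto intro!: bdd_aboveI[where M=1])
      have "cmod (chf \<mu> (complex_of_real r)) \<in> {cmod (chf \<mu> t) | t. cmod t = r}" using r by auto
      from cSup_upper[OF this bdd] show "0 \<le> Sup {cmod (chf \<mu> t) | t. cmod t = r}"
        by (meson norm_ge_zero order_trans)
    qed
    show "\<forall>\<^sub>F r in at_top. Sup {cmod (chf \<mu> t) | t. cmod t = r} \<le> psit \<mu> r"
      using \<open>\<forall>\<^sub>F r in at_top. (0::real) \<le> r\<close>
    proof eventually_elim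
      fix r :: real assume r: "0 \<le> r"
      have ne: "{cmod (chf \<mu> t) | t. cmod t = r} \<noteq> {}"
        using r by (auto intro!: exI[of _ "complex_of_real r"])
      show "Sup {cmod (chf \<mu> t) | t. cmod t = r} \<le> psit \<mu> r"
        unfolding psit_def by (rule cSup_subset_mono[OF ne psit_bdd]) auto
    qed
  qed
qed

end



lemma polar_ex: "\<exists>\<alpha>. A = sqrt (A\<^sup>2 + B\<^sup>2) * cos \<alpha> \<and> B = sqrt (A\<^sup>2 + B\<^sup>2) * sin \<alpha>"
proof -
  define z where "z = Complex A B"
  have "rcis (cmod z) (Arg z) = z" by (rule rcis_cmod_Arg)
  then have "Re (rcis (cmod z) (Arg z)) = A" "Im (rcis (cmod z) (Arg z)) = B" by (simp_all add: z_def)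
  moreover have "cmod z = sqrt (A\<^sup>2 + B\<^sup>2)" by (simp add: z_def cmod_def)
  ultimately have "A = sqrt (A\<^sup>2 + B\<^sup>2) * cos (Arg z)" "B = sqrt (A\<^sup>2 + B\<^sup>2) * sin (Arg z)"
    by simp_all
  then show ?thesis by blast
qed

lemma exists_s0:
  assumes b: "b \<noteq> 0"
  shows "\<exists>s0 k. A0 \<le> s0 \<and> s0 \<le> A0 + 2 * pi / \<bar>b\<bar> \<and> b * s0 - \<alpha> = 2 * pi * of_int k"
proof (cases "b > 0")
  case True
  define y where "y = (b * A0 - \<alpha>) / (2 * pi)"
  define k where "k = \<lceil>y\<rceil>"
  define s0 where "s0 = (\<alpha> + 2 * pi * of_int k) / b"
  have bs0: "b * s0 = \<alpha> + 2 * pi * of_int k" unfolding s0_def using True by simp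
  have "y \<le> of_int k" "of_int k < y + 1" unfolding k_def by linarith+
  then have "b * A0 \<le> \<alpha> + 2 * pi * of_int k" "\<alpha> + 2 * pi * of_int k < b * A0 + 2 * pi"
    unfolding y_def by (simp_all add: field_simps)
  moreover have "b * (A0 + 2 * pi / b) = b * A0 + 2 * pi" using True by (simp add: field_simps)
  ultimately have "b * A0 \<le> b * s0" "b * s0 \<le> b * (A0 + 2 * pi / b)"
    unfolding bs0 by linarith+
  then have "A0 \<le> s0" "s0 \<le> A0 + 2 * pi / \<bar>b\<bar>"
    using True by (simp_all add: mult_le_cancel_left_pos)
  then show ?thesis using bs0 by auto
next
  case False
  then have bn: "b < 0" using b by simp
  define y where "y = (b * A0 - \<alpha>) / (2 * pi)"
  define k where "k = \<lfloor>y\<rfloor>"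
  define s0 where "s0 = (\<alpha> + 2 * pi * of_int k) / b"
  have bs0: "b * s0 = \<alpha> + 2 * pi * of_int k" unfolding s0_def using bn by simp
  have "of_int k \<le> y" "y - 1 < of_int k" unfolding k_def by linarith+
  then have "\<alpha> + 2 * pi * of_int k \<le> b * A0" "b * A0 - 2 * pi < \<alpha> + 2 * pi * of_int k"
    unfolding y_def by (simp_all add: field_simps)
  moreover have "b * (A0 - 2 * pi / b) = b * A0 - 2 * pi" using bn by (simp add: field_simps)
  ultimately have "b * s0 \<le> b * A0" "b * (A0 - 2 * pi / b) \<le> b * s0"
    unfolding bs0 by linarith+
  then have "A0 \<le> s0" "s0 \<le> A0 - 2 * pi / b"
    using bn by (simp_all add: mult_le_cancel_left_neg)
  moreover have "A0 - 2 * pi / b = A0 + 2 * pi / \<bar>b\<bar>" using bn by simp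
  ultimately show ?thesis using bs0 by auto
qed

lemma cos_ge_half: "\<bar>y\<bar> \<le> pi / 3 \<Longrightarrow> 1 / 2 \<le> cos y"
proof -
  assume y: "\<bar>y\<bar> \<le> pi / 3"
  have "cos (pi / 3) \<le> cos \<bar>y\<bar>" by (rule cos_monotone_0_pi_le) (use y in auto)
  moreover have "cos \<bar>y\<bar> = cos y" by (cases "y \<ge> 0") auto
  ultimately show ?thesis by (simp add: cos_60)
qed

lemma osc1:
  fixes lam :: complex
  assumes apos: "Re lam > 0" and bnz: "Im lam \<noteq> 0"
  shows "\<exists>\<kappa>>0. \<exists>R1. \<forall>c. R1 \<le> cmod c \<longrightarrow>
    ennreal \<kappa> \<le> (\<integral>\<^sup>+ s. ennreal (exponential_density 1 s * (1 - cos (Re (c * exp (- lam * complex_of_real s))))) \<partial>lborel)"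
proof -
  define a where "a = Re lam"
  define b where "b = Im lam"
  have a: "a > 0" and b: "b \<noteq> 0" using apos bnz by (simp_all add: a_def b_def)
  define h where "h = pi / (3 * \<bar>b\<bar>)"
  have hpos: "h > 0" using b by (simp add: h_def)
  define A0 where "A0 = 1 + h"
  define S1 where "S1 = A0 + 2 * pi / \<bar>b\<bar> + h"
  define \<kappa> where "\<kappa> = exp (- S1) * (h * exp (- a * S1)) / 2"
  have lampos: "cmod lam > 0" using apos by (auto simp: complex_eq_iff)
  define R1 where "R1 = 4 * exp (a * S1) / (h * cmod lam)"
  have R1pos: "R1 > 0" using hpos lampos by (simp add: R1_def)
  show ?thesis
  proof (rule exI[of _ \<kappa>], intro conjI exI[of _ R1] allI impI)
    show "\<kappa> > 0" using hpos by (simp add: \<kappa>_def)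
  next
    fix c assume c: "R1 \<le> cmod c"
    define p1 where "p1 = Re c"
    define p2 where "p2 = Im c"
    define A where "A = a * p1 - b * p2"
    define B where "B = a * p2 + b * p1"
    define R where "R = sqrt (A\<^sup>2 + B\<^sup>2)"
    have "A\<^sup>2 + B\<^sup>2 = (a\<^sup>2 + b\<^sup>2) * (p1\<^sup>2 + p2\<^sup>2)"
      unfolding A_def B_def by (simp add: power2_eq_square algebra_simps)
    then have R_eq: "R = cmod lam * cmod c"
      unfolding R_def by (simp add: real_sqrt_mult cmod_def a_def b_def p1_def p2_def)
    have "R \<ge> cmod lam * R1" unfolding R_eq using c lampos by (simp add: mult_left_mono)
    also have "cmod lam * R1 = 4 * exp (a * S1) / h" unfolding R1_def using lampos by simp
    finally have RR: "4 * exp (a * S1) / h \<le> R" .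
    have Rpos: "R > 0" using RR hpos by (smt (verit) divide_pos_pos exp_gt_zero)
    obtain \<alpha> where pol: "A = R * cos \<alpha>" "B = R * sin \<alpha>" using polar_ex[of A B] unfolding R_def by blast
    obtain s0 k where s0: "A0 \<le> s0" "s0 \<le> A0 + 2 * pi / \<bar>b\<bar>" "b * s0 - \<alpha> = 2 * pi * of_int k"
      using exists_s0[OF b] by blast
    define lo where "lo = s0 - h"
    define hi where "hi = s0 + h"
    have lo1: "1 \<le> lo" and lohi: "lo < hi" and hiS: "hi \<le> S1"
      using s0 hpos by (auto simp: lo_def hi_def A0_def S1_def)
    define g where "g s = exp (- a * s) * (p1 * cos (b * s) + p2 * sin (b * s))" for s
    define q where "q s = exp (- a * s) * (A * cos (b * s) + B * sin (b * s))" for s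
    have g_eq: "Re (c * exp (- lam * complex_of_real s)) = g s" for s
      by (simp add: g_def Re_exp Im_exp p1_def p2_def a_def b_def algebra_simps)
    have q_pol: "q s = exp (- a * s) * R * cos (b * s - \<alpha>)" for s
      unfolding q_def pol cos_diff by (simp add: algebra_simps)
    have dg: "(g has_real_derivative - q s) (at s)" for s
      unfolding g_def q_def A_def B_def
      by (rule derivative_eq_intros refl | simp)+ (simp add: algebra_simps)
    have qI: "exp (- a * S1) * R / 2 \<le> q s \<and> q s \<le> R" if s: "lo \<le> s" "s \<le> hi" for s
    proof -
      have "\<bar>b * (s - s0)\<bar> \<le> \<bar>b\<bar> * h" using s by (auto simp: abs_mult lo_def hi_def intro!: mult_left_mono)
      also have "\<bar>b\<bar> * h = pi / 3" using b by (simp add: h_def)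
      finally have "1 / 2 \<le> cos (b * (s - s0))" by (rule cos_ge_half)
      moreover have "b * s - \<alpha> = b * (s - s0) + 2 * pi * of_int k" using s0(3) by (simp add: algebra_simps)
      ultimately have cs: "1 / 2 \<le> cos (b * s - \<alpha>)" by (simp add: cos_add cos_int_2pin sin_int_2pin)
      have e1: "exp (- a * S1) \<le> exp (- a * s)" using s hiS a by (simp add: mult_left_mono)
      have e2: "exp (- a * s) \<le> 1" using s lo1 a by simp
      have "exp (- a * S1) * R / 2 \<le> exp (- a * s) * R * (1/2)"
        using e1 Rpos by (simp add: mult_right_mono)
      also have "\<dots> \<le> exp (- a * s) * R * cos (b * s - \<alpha>)"
        using cs Rpos by (intro mult_left_mono) auto
      finally have l: "exp (- a * S1) * R / 2 \<le> q s" unfolding q_pol .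
      have "q s \<le> exp (- a * s) * R * 1" unfolding q_pol using Rpos by (intro mult_left_mono) auto
      also have "\<dots> \<le> R" using e2 Rpos by (simp add: mult_left_le_one_le)
      finally show ?thesis using l by simp
    qed
    obtain \<xi> where xi: "lo < \<xi>" "\<xi> < hi" "g hi - g lo = (hi - lo) * (- q \<xi>)"
      using MVT2[OF lohi, of g "\<lambda>s. - q s"] dg by blast
    have "g lo - g hi = 2 * h * q \<xi>" using xi(3) by (simp add: lo_def hi_def)
    also have "\<dots> \<ge> 2 * h * (exp (- a * S1) * R / 2)"
      using qI[of \<xi>] xi hpos by (intro mult_left_mono) auto
    finally have gdiff: "h * exp (- a * S1) * R \<le> g lo - g hi" by simp
    define G where "G s = sin (g s) - g s" for s
    have FTC: "((\<lambda>s. q s * (1 - cos (g s))) has_integral G hi - G lo) {lo..hi}"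
    proof (rule fundamental_theorem_of_calculus)
      show "lo \<le> hi" using lohi by simp
      fix x assume "x \<in> {lo..hi}"
      have "(G has_real_derivative q x * (1 - cos (g x))) (at x)"
        unfolding G_def by (rule derivative_eq_intros dg refl | simp)+ (simp add: algebra_simps)
      then show "(G has_vector_derivative q x * (1 - cos (g x))) (at x within {lo..hi})"
        by (simp add: has_real_derivative_iff_has_vector_derivative has_vector_derivative_at_within)
    qed
    have Gdiff: "h * exp (- a * S1) * R - 2 \<le> G hi - G lo"
      using gdiff sin_bound_lemma[of "sin (g hi)" "sin (g hi)" 0] by (simp add: G_def) (smt (verit) sin_ge_minus_one sin_le_one)
    define K where "K = exp (- S1) / R"
    have Kpos: "K > 0" using Rpos by (simp add: K_def)
    have FTC2: "((\<lambda>s. K * (q s * (1 - cos (g s)))) has_integral K * (G hi - G lo)) {lo..hi}"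
      by (rule has_integral_mult_right[OF FTC])
    have nn: "(\<integral>\<^sup>+ x. ennreal (indicator {lo..hi} x * (K * (q x * (1 - cos (g x))))) \<partial>lborel) = ennreal (K * (G hi - G lo))"
    proof (rule nn_integral_has_integral_lebesgue[OF _ FTC2])
      fix x assume "x \<in> {lo..hi}"
      then have "exp (- a * S1) * R / 2 \<le> q x" using qI[of x] by auto
      moreover have "0 < exp (- a * S1) * R / 2" using Rpos by simp
      ultimately have "0 \<le> q x" by linarith
      then show "0 \<le> K * (q x * (1 - cos (g x)))"
        using Kpos by (intro mult_nonneg_nonneg) auto
    qed
    have "\<kappa> \<le> K * (G hi - G lo)"
    proof -
      have "2 / R \<le> h * exp (- a * S1) / 2"
      proof -
        have "2 / R \<le> 2 / (4 * exp (a * S1) / h)"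
          using RR hpos Rpos by (intro divide_left_mono) auto
        also have "\<dots> = h * exp (- a * S1) / 2" by (simp add: exp_minus field_simps)
        finally show ?thesis .
      qed
      moreover have "K * (G hi - G lo) \<ge> K * (h * exp (- a * S1) * R - 2)"
        using Gdiff Kpos by (intro mult_left_mono) auto
      moreover have "K * (h * exp (- a * S1) * R - 2) = exp (- S1) * (h * exp (- a * S1) - 2 / R)"
        using Rpos by (simp add: K_def field_simps)
      moreover have "exp (- S1) * (h * exp (- a * S1) - 2 / R) \<ge> exp (- S1) * (h * exp (- a * S1) / 2)"
        using \<open>2 / R \<le> h * exp (- a * S1) / 2\<close> by (intro mult_left_mono) auto
      ultimately show ?thesis unfolding \<kappa>_def by linarith
    qed
    then have "ennreal \<kappa> \<le> (\<integral>\<^sup>+ x. ennreal (indicator {lo..hi} x * (K * (q x * (1 - cos (g x))))) \<partial>lborel)"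
      unfolding nn by (rule ennreal_leI)
    also have "\<dots> \<le> (\<integral>\<^sup>+ s. ennreal (exponential_density 1 s * (1 - cos (Re (c * exp (- lam * complex_of_real s))))) \<partial>lborel)"
    proof (rule nn_integral_mono, rule ennreal_leI)
      fix x
      show "indicator {lo..hi} x * (K * (q x * (1 - cos (g x)))) \<le> exponential_density 1 x * (1 - cos (Re (c * exp (- lam * complex_of_real x))))"
      proof (cases "x \<in> {lo..hi}")
        case True
        then have x: "lo \<le> x" "x \<le> hi" by auto
        have c0: "0 \<le> 1 - cos (g x)" by simp
        have "K * q x \<le> exp (- S1)" using qI[OF x] Rpos by (simp add: K_def field_simps)
        also have "\<dots> \<le> exp (- x)" using x hiS by simp
        finally have "K * q x * (1 - cos (g x)) \<le> exp (- x) * (1 - cos (g x))"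
          using c0 by (rule mult_right_mono)
        moreover have "exponential_density 1 x = exp (- x)" using x lo1 by (simp add: exponential_density_def)
        ultimately show ?thesis using True unfolding g_eq by (simp add: mult.assoc)
      next
        case False
        have "0 \<le> exponential_density 1 x" by (simp add: exponential_density_def)
        then show ?thesis using False by simp
      qed
    qed
    finally show "ennreal \<kappa> \<le> (\<integral>\<^sup>+ s. ennreal (exponential_density 1 s * (1 - cos (Re (c * exp (- lam * complex_of_real s))))) \<partial>lborel)" .
  qed
qed



lemma dens_int:
  assumes l: "(0::real) < l"
  shows "integrable lborel (exponential_density l)" "(\<integral>x. exponential_density l x \<partial>lborel) = 1"
proof -
  interpret D: prob_space "density lborel (exponential_density l)" by (rule prob_space_exponential_density[OF l])
  have nn: "AE x in lborel. 0 \<le> exponential_density l x" using exponential_density_nonneg[OF l] by simp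
  have "integrable (density lborel (exponential_density l)) (\<lambda>_. 1::real)" by simp
  then have "integrable lborel (\<lambda>x. exponential_density l x *\<^sub>R (1::real))"
    by (subst (asm) integrable_density) (use nn in auto)
  then show "integrable lborel (exponential_density l)" by simp
  have "(\<integral>x. 1 \<partial>density lborel (exponential_density l)) = (\<integral>x. exponential_density l x *\<^sub>R (1::real) \<partial>lborel)"
    by (rule integral_density) (use nn in auto)
  then show "(\<integral>x. exponential_density l x \<partial>lborel) = 1" using D.prob_space by simp
qed

lemma lap_lborel:
  assumes j: "(0::real) < j" and a: "0 < a"
  shows "integrable lborel (\<lambda>x. exponential_density j x * exp (- a * x))"
    "(\<integral>x. exponential_density j x * exp (- a * x) \<partial>lborel) = j / (j + a)"
proof -
  have eq: "exponential_density j x * exp (- a * x) = (j / (j + a)) * exponential_density (j + a) x" for x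
  proof (cases "x < 0")
    case True then show ?thesis by (simp add: exponential_density_def)
  next
    case False
    have "exponential_density j x * exp (- a * x) = j * (exp (- x * j) * exp (- a * x))"
      using False by (simp add: exponential_density_def)
    also have "exp (- x * j) * exp (- a * x) = exp (- x * (j + a))"
      by (simp add: exp_add[symmetric] algebra_simps)
    also have "j * exp (- x * (j + a)) = (j / (j + a)) * ((j + a) * exp (- x * (j + a)))"
      using j a by simp
    also have "(j + a) * exp (- x * (j + a)) = exponential_density (j + a) x"
      using False by (simp add: exponential_density_def)
    finally show ?thesis .
  qed
  have l: "0 < j + a" using j a by simp
  show "integrable lborel (\<lambda>x. exponential_density j x * exp (- a * x))"
    unfolding eq using dens_int(1)[OF l] by simp
  show "(\<integral>x. exponential_density j x * exp (- a * x) \<partial>lborel) = j / (j + a)"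
    unfolding eq using dens_int(2)[OF l] by simp
qed

lemma telescope: "real (Suc n) * (\<Prod>j=1..n. real j / (real j + 1)) = 1"
proof (induction n)
  case 0 then show ?case by simp
next
  case (Suc n)
  have "real (Suc (Suc n)) * (\<Prod>j=1..Suc n. real j / (real j + 1))
        = real (Suc (Suc n)) * ((\<Prod>j=1..n. real j / (real j + 1)) * (real (Suc n) / (real (Suc n) + 1)))"
    by (simp add: prod.nat_ivl_Suc')
  also have "\<dots> = real (Suc n) * (\<Prod>j=1..n. real j / (real j + 1))"
    by (simp add: field_simps)
  finally show ?case using Suc by (simp add: mult.commute)
qed

lemma laplace_ne:
  assumes "(0::real) < a" "a \<noteq> 1" "1 \<le> n"
  shows "real (Suc n) * (\<Prod>j=1..n. real j / (real j + a)) \<noteq> 1"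
proof
  assume eq: "real (Suc n) * (\<Prod>j=1..n. real j / (real j + a)) = 1"
  have one: "1 \<in> {1..n}" using assms by simp
  have pa: "(\<Prod>j=1..n. real j / (real j + a)) = 1 / real (Suc n)"
    using eq by (simp add: field_simps del: of_nat_Suc)
  have p1: "(\<Prod>j=1..n. real j / (real j + 1)) = 1 / real (Suc n)"
    using telescope[of n] by (simp add: field_simps del: of_nat_Suc)
  show False
  proof (cases "a < 1")
    case True
    have "(\<Prod>j=1..n. real j / (real j + 1)) < (\<Prod>j=1..n. real j / (real j + a))"
      by (rule prod_mono_strict[OF one]) (use True assms in \<open>auto intro!: divide_left_mono simp: field_simps\<close>)
    then show False using pa p1 by simp
  next
    case False
    then have a1: "1 < a" using assms by simp
    have "(\<Prod>j=1..n. real j / (real j + a)) < (\<Prod>j=1..n. real j / (real j + 1))"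
      by (rule prod_mono_strict[OF one]) (use a1 assms in \<open>auto intro!: divide_left_mono simp: field_simps\<close>)
    then show False using pa p1 by simp
  qed
qed

locale L7 =
  fixes M :: "'a measure" and m :: nat and lam :: complex
    and Z :: "'a \<Rightarrow> complex" and Zs :: "nat \<Rightarrow> 'a \<Rightarrow> complex"
    and \<tau> :: "nat \<Rightarrow> 'a \<Rightarrow> real" and T :: "'a \<Rightarrow> real"
  assumes ps: "prob_space M"
    and m2: "m \<ge> 2"
    and lam1: "lam \<noteq> 1" and apos: "Re lam > 0"
    and tau: "\<And>j. j \<in> {1..m-1} \<Longrightarrow> distributed M lborel (\<tau> j) (exponential_density (real j))"
    and Tdef: "\<And>\<omega>. T \<omega> = (\<Sum>j=1..m-1. \<tau> j \<omega>)"
    and Zm: "Z \<in> borel_measurable M"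
    and Zi: "integrable M Z"
    and EZ: "integral\<^sup>L M Z \<noteq> 0"
    and Zsm: "\<And>j. j \<in> {1..m} \<Longrightarrow> Zs j \<in> borel_measurable M"
    and Zsd: "\<And>j. j \<in> {1..m} \<Longrightarrow> distr M borel (Zs j) = distr M borel Z"
    and ind: "prob_space.indep_vars M (\<lambda>_. borel)
           (\<lambda>i. case i of Inl j \<Rightarrow> Zs j | Inr j \<Rightarrow> (\<lambda>\<omega>. complex_of_real (\<tau> j \<omega>)))
           (Inl ` {1..m} \<union> Inr ` {1..m-1})"
    and fixp: "distr M borel Z =
         distr M borel (\<lambda>\<omega>. exp (- lam * complex_of_real (T \<omega>)) * (\<Sum>j=1..m. Zs j \<omega>))"
begin

sublocale prob_space M by (rule ps)

definition IA :: "(nat + nat) set" where "IA = Inl ` {1..m}"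
definition IB :: "(nat + nat) set" where "IB = Inr ` {1..m-1}"
definition II :: "(nat + nat) set" where "II = IA \<union> IB"
definition "X i = (if i \<in> II then (case i of Inl j \<Rightarrow> Zs j | Inr j \<Rightarrow> (\<lambda>\<omega>. complex_of_real (\<tau> j \<omega>))) else (\<lambda>_. 0))"
definition "N i = distr M borel (X i)"
definition "\<mu> = distr M borel Z"
definition "P = distr M borel T"
definition S :: "(nat + nat \<Rightarrow> complex) \<Rightarrow> real" where "S y = (\<Sum>j=1..m-1. Re (y (Inr j)))"
definition "W \<omega> = exp (- lam * complex_of_real (T \<omega>)) * (\<Sum>j=1..m. Zs j \<omega>)"

lemma tau_meas[measurable]: "j \<in> {1..m-1} \<Longrightarrow> \<tau> j \<in> borel_measurable M"
  using distributed_measurable[OF tau] by simp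

lemma T_meas[measurable]: "T \<in> borel_measurable M"
proof -
  have "(\<lambda>\<omega>. \<Sum>j=1..m-1. \<tau> j \<omega>) \<in> borel_measurable M"
    by (rule borel_measurable_sum) (use tau_meas in auto)
  moreover have "T = (\<lambda>\<omega>. \<Sum>j=1..m-1. \<tau> j \<omega>)" using Tdef by auto
  ultimately show ?thesis by simp
qed

lemma X_meas[measurable]: "X i \<in> borel_measurable M"
  by (auto simp: X_def II_def IA_def IB_def split: sum.split intro: Zsm)

lemma N_eq: "N = (\<lambda>i. distr M borel (X i))" by (rule ext) (simp add: N_def)

lemma N_prob: "prob_space (N i)"
  unfolding N_def by (rule prob_space_distr) simp

lemma sets_N[simp]: "sets (N i) = sets borel"
  by (simp add: N_def)

lemma psf: "product_sigma_finite N"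
  unfolding product_sigma_finite_def using N_prob by (simp add: prob_space_imp_sigma_finite)

lemma II_ne: "II \<noteq> {}" using m2 by (auto simp: II_def IA_def)
lemma IB_ne: "IB \<noteq> {}" using m2 by (auto simp: IB_def)
lemma fin[simp]: "finite IA" "finite IB" "finite II" by (auto simp: IA_def IB_def II_def)
lemma disj: "IA \<inter> IB = {}" by (auto simp: IA_def IB_def)

lemma indX: "indep_vars (\<lambda>_. borel) X II"
proof -
  have "indep_vars (\<lambda>_. borel) (\<lambda>i. case i of Inl j \<Rightarrow> Zs j | Inr j \<Rightarrow> (\<lambda>\<omega>. complex_of_real (\<tau> j \<omega>))) II"
    using ind by (simp add: II_def IA_def IB_def)
  then show ?thesis by (rule indep_vars_cong[THEN iffD1, rotated -1]) (auto simp: X_def)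
qed

lemma joint: "distr M (PiM II (\<lambda>_. borel)) (\<lambda>\<omega>. \<lambda>i\<in>II. X i \<omega>) = PiM II N"
  using indep_vars_iff_distr_eq_PiM[OF II_ne, of X "\<lambda>_. borel"] indX by (simp add: N_eq)

lemma jointB: "distr M (PiM IB (\<lambda>_. borel)) (\<lambda>\<omega>. \<lambda>i\<in>IB. X i \<omega>) = PiM IB N"
proof -
  have "indep_vars (\<lambda>_. borel) X IB" by (rule indep_vars_subset[OF indX]) (auto simp: II_def)
  then show ?thesis using indep_vars_iff_distr_eq_PiM[OF IB_ne, of X "\<lambda>_. borel"] by (simp add: N_eq)
qed

lemma comp_meas:
  assumes "i \<in> J" "\<And>i. sets (M' i) = sets borel" "f \<in> borel_measurable borel"
  shows "(\<lambda>x. f (x i)) \<in> borel_measurable (PiM J M')"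
proof -
  have "f \<in> borel_measurable (M' i)" using assms(2,3) by (simp add: measurable_cong_sets[OF assms(2) refl])
  from measurable_compose[OF measurable_component_singleton[OF assms(1), of M'] this] show ?thesis .
qed

lemma S_meas_gen: "(\<And>i. sets (M' i) = sets borel) \<Longrightarrow> S \<in> borel_measurable (PiM IB M')"
  unfolding S_def by (intro borel_measurable_sum comp_meas) (auto simp: IB_def)

lemma S_meas[measurable]: "S \<in> borel_measurable (PiM IB N)"
  by (rule S_meas_gen) simp

lemma S_X: "S (\<lambda>i\<in>IB. X i \<omega>) = T \<omega>"
  by (simp add: S_def Tdef IB_def X_def II_def)

lemma nn_T: "h \<in> borel_measurable borel \<Longrightarrow> (\<integral>\<^sup>+ s. h s \<partial>P) = (\<integral>\<^sup>+ y. h (S y) \<partial>PiM IB N)"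
proof -
  assume [measurable]: "h \<in> borel_measurable borel"
  have "(\<integral>\<^sup>+ s. h s \<partial>P) = (\<integral>\<^sup>+ \<omega>. h (T \<omega>) \<partial>M)" unfolding P_def by (simp add: nn_integral_distr)
  also have "\<dots> = (\<integral>\<^sup>+ \<omega>. h (S (\<lambda>i\<in>IB. X i \<omega>)) \<partial>M)" by (simp add: S_X)
  also have "\<dots> = (\<integral>\<^sup>+ y. h (S y) \<partial>distr M (PiM IB (\<lambda>_. borel)) (\<lambda>\<omega>. \<lambda>i\<in>IB. X i \<omega>))"
  proof (rule nn_integral_distr[symmetric])
    show "(\<lambda>\<omega>. \<lambda>i\<in>IB. X i \<omega>) \<in> M \<rightarrow>\<^sub>M Pi\<^sub>M IB (\<lambda>_. borel)"
      by (rule measurable_restrict) simp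
    show "(\<lambda>y. h (S y)) \<in> borel_measurable (distr M (Pi\<^sub>M IB (\<lambda>_. borel)) (\<lambda>\<omega>. \<lambda>i\<in>IB. X i \<omega>))"
      unfolding measurable_distr_eq1 by (rule measurable_compose[OF S_meas_gen]) auto
  qed
  finally show ?thesis unfolding jointB .
qed


lemma S_meas_J: "IB \<subseteq> J \<Longrightarrow> (\<And>i. sets (M' i) = sets borel) \<Longrightarrow> S \<in> borel_measurable (PiM J M')"
  unfolding S_def by (intro borel_measurable_sum comp_meas) (auto simp: IB_def)

definition SA :: "(nat + nat \<Rightarrow> complex) \<Rightarrow> complex" where "SA x = (\<Sum>j=1..m. x (Inl j))"

lemma SA_meas_J: fixes M' :: "nat + nat \<Rightarrow> complex measure" shows "IA \<subseteq> J \<Longrightarrow> (\<And>i. sets (M' i) = sets borel) \<Longrightarrow> SA \<in> borel_measurable (PiM J M')"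
proof -
  assume a: "IA \<subseteq> J" "\<And>i. sets (M' i) = sets borel"
  have cj: "(\<lambda>x. x (Inl j)) \<in> borel_measurable (PiM J M')" if "j \<in> {1..m}" for j
  proof -
    have "Inl j \<in> J" using a that by (auto simp: IA_def)
    from measurable_component_singleton[OF this, of M']
    show ?thesis unfolding measurable_cong_sets[OF refl a(2)] .
  qed
  have "(\<lambda>x. \<Sum>j\<in>{1..m}. x (Inl j)) \<in> borel_measurable (PiM J M')"
    by (rule Borel_Space.borel_measurable_sum) (rule cj)
  then show ?thesis by (simp add: SA_def[abs_def])
qed

lemma meas_II[measurable]:
  "S \<in> borel_measurable (PiM II N)" "S \<in> borel_measurable (PiM II (\<lambda>_. borel))"
  "SA \<in> borel_measurable (PiM II N)" "SA \<in> borel_measurable (PiM II (\<lambda>_. borel))"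
  "SA \<in> borel_measurable (PiM IA N)"
  by (auto intro!: S_meas_J SA_meas_J simp: II_def)

lemma prob_P: "prob_space P" and sets_P: "sets P = sets borel"
  unfolding P_def by (auto intro!: prob_space_distr)

lemma mu_eq: "\<mu> = distr M borel Z" by (simp add: \<mu>_def)
lemma prob_mu: "prob_space \<mu>" and sets_mu: "sets \<mu> = sets borel"
  unfolding \<mu>_def by (auto intro!: prob_space_distr Zm)

lemma N_A: "i \<in> IA \<Longrightarrow> N i = \<mu>"
  by (auto simp: N_def X_def II_def IA_def \<mu>_def Zsd)

lemma restrict_X:
  "S (\<lambda>i\<in>II. X i \<omega>) = T \<omega>" "SA (\<lambda>i\<in>II. X i \<omega>) = (\<Sum>j=1..m. Zs j \<omega>)"
  by (auto simp: S_def SA_def Tdef II_def IA_def IB_def X_def intro!: sum.cong)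

lemma int_T: fixes h :: "real \<Rightarrow> 'b::{banach, second_countable_topology}" shows "h \<in> borel_measurable borel \<Longrightarrow> (LINT s|P. h s) = (LINT y|PiM IB N. h (S y))"
proof -
  assume [measurable]: "h \<in> borel_measurable borel"
  have "(LINT s|P. h s) = (LINT \<omega>|M. h (T \<omega>))" unfolding P_def by (rule Bochner_Integration.integral_distr[of T M borel h]) simp_all
  also have "\<dots> = (LINT \<omega>|M. h (S (\<lambda>i\<in>IB. X i \<omega>)))" by (simp add: S_X)
  also have "\<dots> = (LINT y|distr M (PiM IB (\<lambda>_. borel)) (\<lambda>\<omega>. \<lambda>i\<in>IB. X i \<omega>). h (S y))"
  proof (rule Bochner_Integration.integral_distr[of "\<lambda>\<omega>. \<lambda>i\<in>IB. X i \<omega>" M _ "\<lambda>y. h (S y)", symmetric])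
    show "(\<lambda>\<omega>. \<lambda>i\<in>IB. X i \<omega>) \<in> M \<rightarrow>\<^sub>M Pi\<^sub>M IB (\<lambda>_. borel)"
      by (rule measurable_restrict) simp
    show "(\<lambda>y. h (S y)) \<in> borel_measurable (Pi\<^sub>M IB (\<lambda>_. borel))"
      by (rule measurable_compose[OF S_meas_gen]) auto
  qed
  finally show ?thesis unfolding jointB .
qed

lemma int_II: fixes g :: "(nat + nat \<Rightarrow> complex) \<Rightarrow> 'b::{banach, second_countable_topology}" shows "g \<in> borel_measurable (PiM II (\<lambda>_. borel)) \<Longrightarrow> (LINT \<omega>|M. g (\<lambda>i\<in>II. X i \<omega>)) = (LINT x|PiM II N. g x)"
proof -
  assume g: "g \<in> borel_measurable (PiM II (\<lambda>_. borel))"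
  have "(LINT \<omega>|M. g (\<lambda>i\<in>II. X i \<omega>)) = (LINT x|distr M (PiM II (\<lambda>_. borel)) (\<lambda>\<omega>. \<lambda>i\<in>II. X i \<omega>). g x)"
  proof (rule Bochner_Integration.integral_distr[of "\<lambda>\<omega>. \<lambda>i\<in>II. X i \<omega>" M _ g, symmetric])
    show "(\<lambda>\<omega>. \<lambda>i\<in>II. X i \<omega>) \<in> M \<rightarrow>\<^sub>M Pi\<^sub>M II (\<lambda>_. borel)"
      by (rule measurable_restrict) simp
  qed (rule g)
  then show ?thesis unfolding joint .
qed

lemma merge_BA:
  "S (merge IB IA (y, x)) = S y" "SA (merge IB IA (y, x)) = SA x"
  by (auto simp: S_def SA_def merge_def IA_def IB_def intro!: sum.cong)

lemma II_BA: "II = IB \<union> IA" by (auto simp: II_def)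


lemma W_meas[measurable]: "W \<in> borel_measurable M"
  unfolding W_def by (intro borel_measurable_times borel_measurable_sum) (auto intro: Zsm)

lemma mu_W: "\<mu> = distr M borel W"
  unfolding \<mu>_def W_def by (rule fixp)

lemma card_IA: "card IA = m" by (simp add: IA_def card_image)

lemma cinner_sum: "cinner u (\<Sum>j\<in>J. f j) = (\<Sum>j\<in>J. cinner u (f j))"
  by (simp add: cinner_eq Re_sum Im_sum sum_distrib_left sum.distrib)

lemma cinner_scale: "cinner t (e * z) = cinner (cnj e * t) z"
  by (simp add: cinner_def algebra_simps)

lemma prob_PiM: "prob_space (PiM J N)"
  by (intro prob_space_PiM N_prob)

lemma H1: "cmod (chf \<mu> t) \<le> (LINT s|P. cmod (chf \<mu> (exp (- cnj lam * complex_of_real s) * t)) ^ m)"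
proof -
  define f where "f z = exp (\<i> * complex_of_real (cinner t z))" for z
  define \<Phi> where "\<Phi> x = f (exp (- lam * complex_of_real (S x)) * SA x)" for x
  define v where "v s = exp (- cnj lam * complex_of_real s) * t" for s
  define fe where "fe u z = exp (\<i> * complex_of_real (cinner u z))" for u z
  have f_meas[measurable]: "f \<in> borel_measurable borel" unfolding f_def by measurable
  have Phi_meas: "\<Phi> \<in> borel_measurable (PiM II (\<lambda>_. borel))" "\<Phi> \<in> borel_measurable (PiM II N)"
    unfolding \<Phi>_def by measurable
  have "chf \<mu> t = (LINT z|distr M borel W. f z)" unfolding chf_def mu_W[symmetric] f_def ..
  also have "\<dots> = (LINT \<omega>|M. f (W \<omega>))" by (rule Bochner_Integration.integral_distr[of W M borel f]) simp_all
  also have "\<dots> = (LINT \<omega>|M. \<Phi> (\<lambda>i\<in>II. X i \<omega>))" by (simp add: \<Phi>_def W_def restrict_X)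
  also have "\<dots> = (LINT x|PiM II N. \<Phi> x)" by (rule int_II[OF Phi_meas(1)])
  also have "\<dots> = (LINT y|PiM IB N. LINT x|PiM IA N. \<Phi> (merge IB IA (y, x)))"
  proof -
    interpret Q: prob_space "PiM (IB \<union> IA) N" by (rule prob_PiM)
    have "integrable (PiM (IB \<union> IA) N) \<Phi>"
    proof (rule Q.integrable_const_bound[where B=1])
      show "AE x in Pi\<^sub>M (IB \<union> IA) N. norm (\<Phi> x) \<le> 1" by (simp add: \<Phi>_def f_def norm_exp_i)
    qed (use Phi_meas(2) in \<open>simp add: II_BA\<close>)
    from product_sigma_finite.product_integral_fold[OF psf _ fin(2) fin(1) this] disj
    show ?thesis by (simp add: II_BA Int_commute)
  qed
  also have "\<dots> = (LINT y|PiM IB N. chf \<mu> (v (S y)) ^ m)"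
  proof (rule Bochner_Integration.integral_cong[OF refl])
    fix y
    have "\<Phi> (merge IB IA (y, x)) = (\<Prod>i\<in>IA. fe (cnj (exp (- lam * complex_of_real (S y))) * t) (x i))" for x
    proof -
      have "\<Phi> (merge IB IA (y, x)) = f (exp (- lam * complex_of_real (S y)) * SA x)"
        by (simp add: \<Phi>_def merge_BA)
      also have "\<dots> = exp (\<i> * complex_of_real (\<Sum>j=1..m. cinner (cnj (exp (- lam * complex_of_real (S y))) * t) (x (Inl j))))"
        by (simp add: f_def SA_def cinner_scale cinner_sum)
      also have "\<dots> = (\<Prod>j=1..m. exp (\<i> * complex_of_real (cinner (cnj (exp (- lam * complex_of_real (S y))) * t) (x (Inl j)))))"
        by (simp add: sum_distrib_left exp_sum)
      also have "\<dots> = (\<Prod>i\<in>IA. fe (cnj (exp (- lam * complex_of_real (S y))) * t) (x i))"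
        unfolding IA_def fe_def by (subst prod.reindex) (auto simp: inj_on_def)
      finally show ?thesis .
    qed
    then have "(LINT x|PiM IA N. \<Phi> (merge IB IA (y, x))) = (LINT x|PiM IA N. (\<Prod>i\<in>IA. fe (cnj (exp (- lam * complex_of_real (S y))) * t) (x i)))"
      by simp
    also have "\<dots> = (\<Prod>i\<in>IA. integral\<^sup>L (N i) (\<lambda>z. fe (cnj (exp (- lam * complex_of_real (S y))) * t) z))"
    proof (rule product_sigma_finite.product_integral_prod[OF psf fin(1)])
      fix i :: "nat + nat" assume "i \<in> IA"
      show "integrable (N i) (\<lambda>z. fe (cnj (exp (- lam * complex_of_real (S y))) * t) z)"
        unfolding fe_def by (rule chf_integrable[OF N_prob sets_N])
    qed
    also have "\<dots> = (\<Prod>i\<in>IA. chf \<mu> (v (S y)))"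
    proof (rule prod.cong[OF refl])
      fix i :: "nat + nat" assume "i \<in> IA"
      then show "integral\<^sup>L (N i) (\<lambda>z. fe (cnj (exp (- lam * complex_of_real (S y))) * t) z) = chf \<mu> (v (S y))"
        by (simp add: N_A chf_def fe_def v_def exp_cnj)
    qed
    also have "\<dots> = chf \<mu> (v (S y)) ^ m" by (simp add: card_IA)
    finally show "(LINT x|PiM IA N. \<Phi> (merge IB IA (y, x))) = chf \<mu> (v (S y)) ^ m" .
  qed
  finally have eq: "chf \<mu> t = (LINT y|PiM IB N. chf \<mu> (v (S y)) ^ m)" .
  have vm[measurable]: "(\<lambda>s. chf \<mu> (v s)) \<in> borel_measurable borel"
    using chf_meas[OF prob_mu sets_mu, of "\<lambda>s. exp (- cnj lam * complex_of_real s) * t" borel] by (simp add: v_def)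
  have "cmod (chf \<mu> t) \<le> (LINT y|PiM IB N. cmod (chf \<mu> (v (S y)) ^ m))"
    unfolding eq by (rule integral_norm_bound)
  also have "\<dots> = (LINT y|PiM IB N. cmod (chf \<mu> (v (S y))) ^ m)" by (simp add: norm_power)
  also have "\<dots> = (LINT s|P. cmod (chf \<mu> (v s)) ^ m)"
    by (rule int_T[symmetric]) measurable
  finally show ?thesis unfolding v_def .
qed


lemma int_mu_id: "integrable \<mu> (\<lambda>z. z)"
  unfolding \<mu>_def using Zi by (subst integrable_distr_eq) (auto intro: Zm)

lemma int_W: "integrable M W"
proof -
  have "integrable (distr M borel W) (\<lambda>z. z)" using int_mu_id by (simp add: mu_W)
  then show ?thesis by (subst (asm) integrable_distr_eq) auto
qed

lemma EZ_mu: "integral\<^sup>L M Z = (LINT z|\<mu>. z)"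
  unfolding \<mu>_def by (rule Bochner_Integration.integral_distr[of Z M borel "\<lambda>z. z", symmetric]) (auto intro: Zm)

lemma EW_mu: "integral\<^sup>L M W = (LINT z|\<mu>. z)"
  unfolding mu_W by (rule Bochner_Integration.integral_distr[of W M borel "\<lambda>z. z", symmetric]) auto

lemma marg:
  assumes i: "i \<in> IA"
  shows "integrable (PiM IA N) (\<lambda>x. x i)" "(LINT x|PiM IA N. x i) = (LINT z|\<mu>. z)"
proof -
  define f where "f k = (if k = i then (\<lambda>z::complex. z) else (\<lambda>_. 1))" for k
  have fi: "integrable (N k) (f k)" if "k \<in> IA" for k
  proof (cases "k = i")
    case True then show ?thesis using int_mu_id N_A[OF that] by (simp add: f_def)
  next
    case False
    interpret Nk: prob_space "N k" by (rule N_prob)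
    show ?thesis using False by (simp add: f_def Nk.integrable_const_bound[where B=1])
  qed
  have eq: "(\<Prod>k\<in>IA. f k (x k)) = x i" for x
  proof -
    have "(\<Prod>k\<in>IA. f k (x k)) = (\<Prod>k\<in>IA. if k = i then x k else 1)"
      by (rule prod.cong) (auto simp: f_def)
    also have "\<dots> = x i" using i by (simp add: prod.delta)
    finally show ?thesis .
  qed
  show "integrable (PiM IA N) (\<lambda>x. x i)"
    using product_sigma_finite.product_integrable_prod[OF psf fin(1) fi] by (simp add: eq)
  have "(LINT x|PiM IA N. x i) = (\<Prod>k\<in>IA. integral\<^sup>L (N k) (f k))"
    using product_sigma_finite.product_integral_prod[OF psf fin(1) fi] by (simp add: eq)
  also have "\<dots> = (\<Prod>k\<in>IA. if k = i then (LINT z|\<mu>. z) else 1)"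
  proof (rule prod.cong[OF refl])
    fix k assume k: "k \<in> IA"
    show "integral\<^sup>L (N k) (f k) = (if k = i then (LINT z|\<mu>. z) else 1)"
      using N_A[OF k] prob_space.prob_space[OF prob_mu] by (simp add: f_def)
  qed
  also have "\<dots> = (LINT z|\<mu>. z)" using i by (simp add: prod.delta)
  finally show "(LINT x|PiM IA N. x i) = (LINT z|\<mu>. z)" .
qed

lemma ESA: "integrable (PiM IA N) SA" "(LINT x|PiM IA N. SA x) = of_nat m * (LINT z|\<mu>. z)"
proof -
  have SA_eq: "SA x = (\<Sum>i\<in>IA. x i)" for x
    unfolding SA_def IA_def by (subst sum.reindex) (auto simp: inj_on_def)
  show "integrable (PiM IA N) SA" unfolding SA_eq[abs_def] using marg(1) by auto
  have "(LINT x|PiM IA N. SA x) = (\<Sum>i\<in>IA. LINT x|PiM IA N. x i)"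
    unfolding SA_eq by (rule Bochner_Integration.integral_sum) (rule marg(1))
  also have "\<dots> = (\<Sum>i\<in>IA. LINT z|\<mu>. z)" by (rule sum.cong[OF refl]) (rule marg(2))
  also have "\<dots> = of_nat m * (LINT z|\<mu>. z)" by (simp add: card_IA)
  finally show "(LINT x|PiM IA N. SA x) = of_nat m * (LINT z|\<mu>. z)" .
qed

lemma E_fix: "(LINT z|\<mu>. z) = of_nat m * (LINT z|\<mu>. z) * (LINT y|PiM IB N. exp (- lam * complex_of_real (S y)))"
proof -
  define \<Psi> where "\<Psi> x = exp (- lam * complex_of_real (S x)) * SA x" for x
  have Psi_meas: "\<Psi> \<in> borel_measurable (PiM II (\<lambda>_. borel))" "\<Psi> \<in> borel_measurable (PiM II N)"
    unfolding \<Psi>_def by measurable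
  have WPsi: "W \<omega> = \<Psi> (\<lambda>i\<in>II. X i \<omega>)" for \<omega> by (simp add: \<Psi>_def W_def restrict_X)
  have "(LINT z|\<mu>. z) = (LINT \<omega>|M. \<Psi> (\<lambda>i\<in>II. X i \<omega>))" unfolding EW_mu[symmetric] WPsi ..
  also have "\<dots> = (LINT x|PiM II N. \<Psi> x)" by (rule int_II[OF Psi_meas(1)])
  also have "\<dots> = (LINT y|PiM IB N. LINT x|PiM IA N. \<Psi> (merge IB IA (y, x)))"
  proof -
    have "integrable (distr M (PiM II (\<lambda>_. borel)) (\<lambda>\<omega>. \<lambda>i\<in>II. X i \<omega>)) \<Psi>"
      using int_W unfolding WPsi
      by (subst integrable_distr_eq) (auto intro!: measurable_restrict Psi_meas(1))
    then have "integrable (PiM (IB \<union> IA) N) \<Psi>" unfolding joint by (simp add: II_BA)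
    from product_sigma_finite.product_integral_fold[OF psf _ fin(2) fin(1) this] disj
    show ?thesis by (simp add: II_BA Int_commute)
  qed
  also have "\<dots> = (LINT y|PiM IB N. exp (- lam * complex_of_real (S y)) * (of_nat m * (LINT z|\<mu>. z)))"
  proof (rule Bochner_Integration.integral_cong[OF refl])
    fix y
    have "(LINT x|PiM IA N. \<Psi> (merge IB IA (y, x))) = (LINT x|PiM IA N. exp (- lam * complex_of_real (S y)) * SA x)"
      by (simp add: \<Psi>_def merge_BA)
    also have "\<dots> = exp (- lam * complex_of_real (S y)) * (LINT x|PiM IA N. SA x)" by simp
    finally show "(LINT x|PiM IA N. \<Psi> (merge IB IA (y, x))) = exp (- lam * complex_of_real (S y)) * (of_nat m * (LINT z|\<mu>. z))"
      by (simp add: ESA(2))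
  qed
  also have "\<dots> = (LINT y|PiM IB N. exp (- lam * complex_of_real (S y))) * (of_nat m * (LINT z|\<mu>. z))"
    by simp
  finally show ?thesis by (simp add: algebra_simps)
qed

lemma mL: "of_nat m * (LINT y|PiM IB N. exp (- lam * complex_of_real (S y))) = 1"
proof -
  have ne: "(LINT z|\<mu>. z) \<noteq> 0" using EZ by (simp add: EZ_mu)
  from E_fix have "(LINT z|\<mu>. z) * 1 = (LINT z|\<mu>. z) * (of_nat m * (LINT y|PiM IB N. exp (- lam * complex_of_real (S y))))"
    by (simp add: algebra_simps)
  then show ?thesis using ne by (metis mult.right_neutral mult_cancel_left)
qed


lemma lap_N:
  assumes j: "j \<in> {1..m-1}" and a: "0 < a"
  shows "integrable (N (Inr j)) (\<lambda>z. exp (- a * Re z))"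
    "(LINT z|N (Inr j). exp (- a * Re z)) = real j / (real j + a)"
proof -
  have NX: "N (Inr j) = distr M borel (\<lambda>\<omega>. complex_of_real (\<tau> j \<omega>))"
    using j by (simp add: N_def X_def II_def IB_def)
  have jpos: "0 < real j" using j by simp
  have nn: "\<And>x. 0 \<le> exponential_density (real j) x" using exponential_density_nonneg[OF jpos] by simp
  have iM: "integrable M (\<lambda>\<omega>. exp (- a * \<tau> j \<omega>))"
    using distributed_integrable[OF tau[OF j], of "\<lambda>x. exp (- a * x)"] lap_lborel(1)[OF jpos a] nn by simp
  show "integrable (N (Inr j)) (\<lambda>z. exp (- a * Re z))"
    unfolding NX by (subst integrable_distr_eq) (use iM j in auto)
  have "(LINT z|N (Inr j). exp (- a * Re z)) = (LINT \<omega>|M. exp (- a * \<tau> j \<omega>))"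
    unfolding NX by (subst Bochner_Integration.integral_distr) (use j in auto)
  also have "\<dots> = (\<integral>x. exponential_density (real j) x * exp (- a * x) \<partial>lborel)"
    using distributed_integral[OF tau[OF j], of "\<lambda>x. exp (- a * x)"] nn by simp
  also have "\<dots> = real j / (real j + a)" by (rule lap_lborel(2)[OF jpos a])
  finally show "(LINT z|N (Inr j). exp (- a * Re z)) = real j / (real j + a)" .
qed

lemma laplace_real:
  assumes "Im lam = 0"
  shows "(LINT y|PiM IB N. exp (- lam * complex_of_real (S y))) = complex_of_real (\<Prod>j=1..m-1. real j / (real j + Re lam))"
proof -
  define a where "a = Re lam"
  have lam: "lam = complex_of_real a" using assms by (simp add: a_def complex_eq_iff)
  have a: "0 < a" using apos by (simp add: a_def)
  have eq: "exp (- lam * complex_of_real (S y)) = complex_of_real (\<Prod>i\<in>IB. exp (- a * Re (y i)))" for y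
  proof -
    have "exp (- lam * complex_of_real (S y)) = complex_of_real (exp (- a * S y))"
      by (simp add: lam exp_of_real[symmetric])
    also have "exp (- a * S y) = (\<Prod>j=1..m-1. exp (- a * Re (y (Inr j))))"
      by (simp add: S_def sum_distrib_left exp_sum[symmetric])
    also have "\<dots> = (\<Prod>i\<in>IB. exp (- a * Re (y i)))"
      unfolding IB_def by (subst prod.reindex) (auto simp: inj_on_def)
    finally show ?thesis .
  qed
  have "(LINT y|PiM IB N. exp (- lam * complex_of_real (S y))) = complex_of_real (LINT y|PiM IB N. (\<Prod>i\<in>IB. exp (- a * Re (y i))))"
    unfolding eq by (rule integral_complex_of_real)
  also have "(LINT y|PiM IB N. (\<Prod>i\<in>IB. exp (- a * Re (y i)))) = (\<Prod>i\<in>IB. LINT z|N i. exp (- a * Re z))"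
  proof (rule product_sigma_finite.product_integral_prod[OF psf fin(2)])
    fix i assume "i \<in> IB"
    then obtain j where "i = Inr j" "j \<in> {1..m-1}" by (auto simp: IB_def)
    then show "integrable (N i) (\<lambda>z. exp (- a * Re z))" using lap_N(1)[OF _ a] by simp
  qed
  also have "\<dots> = (\<Prod>j=1..m-1. LINT z|N (Inr j). exp (- a * Re z))"
    unfolding IB_def by (subst prod.reindex) (auto simp: inj_on_def)
  also have "\<dots> = (\<Prod>j=1..m-1. real j / (real j + a))"
    by (rule prod.cong[OF refl]) (rule lap_N(2)[OF _ a])
  finally show ?thesis by (simp add: a_def)
qed


lemma Im_ne: "Im lam \<noteq> 0"
proof
  assume im: "Im lam = 0"
  then have lamr: "lam = complex_of_real (Re lam)" by (simp add: complex_eq_iff)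
  have "Re lam \<noteq> 1" using lam1 lamr by auto
  from mL[unfolded laplace_real[OF im]]
  have "real m * (\<Prod>j=1..m-1. real j / (real j + Re lam)) = 1"
    by (metis (mono_tags, lifting) of_real_eq_1_iff of_real_mult of_real_of_nat_eq)
  moreover have "m = Suc (m - 1)" using m2 by simp
  ultimately have "real (Suc (m-1)) * (\<Prod>j=1..m-1. real j / (real j + Re lam)) = 1" by simp
  with laplace_ne[OF apos \<open>Re lam \<noteq> 1\<close>, of "m-1"] m2 show False by simp
qed


definition IB2 :: "(nat + nat) set" where "IB2 = Inr ` {2..m-1}"
definition S2 :: "(nat + nat \<Rightarrow> complex) \<Rightarrow> real" where "S2 y = (\<Sum>j=2..m-1. Re (y (Inr j)))"

lemma IB_ins: "IB = insert (Inr 1) IB2" and IB2_fin: "finite IB2" and notin: "Inr 1 \<notin> IB2"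
  using m2 by (auto simp: IB_def IB2_def)

lemma S_upd: "S (y(Inr 1 := x)) = Re x + S2 y"
proof -
  have "S (y(Inr 1 := x)) = (\<Sum>j=1..m-1. Re ((y(Inr 1 := x)) (Inr j)))" by (simp add: S_def)
  also have "\<dots> = Re x + (\<Sum>j=2..m-1. Re ((y(Inr 1 := x)) (Inr j)))"
    using m2 by (subst sum.atLeast_Suc_atMost) (auto simp: numeral_2_eq_2)
  also have "(\<Sum>j=2..m-1. Re ((y(Inr 1 := x)) (Inr j))) = S2 y"
    unfolding S2_def by (rule sum.cong) auto
  finally show ?thesis .
qed

lemma S2_meas[measurable]: "S2 \<in> borel_measurable (PiM IB2 N)"
  unfolding S2_def by (intro borel_measurable_sum comp_meas) (auto simp: IB2_def)

lemma H2: "\<exists>\<kappa>>0. \<exists>R0. \<forall>c. R0 \<le> cmod c \<longrightarrow>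
  ennreal \<kappa> \<le> (\<integral>\<^sup>+ s. ennreal (1 - cos (Re (c * exp (- lam * complex_of_real s)))) \<partial>P)"
proof -
  obtain \<kappa> R1 where kap: "\<kappa> > 0" and osc: "\<And>c. R1 \<le> cmod c \<Longrightarrow>
    ennreal \<kappa> \<le> (\<integral>\<^sup>+ s. ennreal (exponential_density 1 s * (1 - cos (Re (c * exp (- lam * complex_of_real s))))) \<partial>lborel)"
    using osc1[OF apos Im_ne] by blast
  define a where "a = Re lam"
  have a: "a > 0" using apos by (simp add: a_def)
  interpret Q: prob_space "PiM IB2 N" by (rule prob_PiM)
  define A where "A n = {y \<in> space (PiM IB2 N). S2 y \<le> real n}" for n :: nat
  have Asets: "A n \<in> sets (PiM IB2 N)" for n unfolding A_def by measurable
  have "(\<lambda>n. emeasure (PiM IB2 N) (A n)) \<longlonglongrightarrow> emeasure (PiM IB2 N) (\<Union>n. A n)"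
    by (rule Lim_emeasure_incseq) (auto simp: Asets incseq_def A_def)
  moreover have "(\<Union>n. A n) = space (PiM IB2 N)"
    by (auto simp: A_def) (meson real_arch_simple)
  ultimately have "(\<lambda>n. emeasure (PiM IB2 N) (A n)) \<longlonglongrightarrow> 1" by (simp add: Q.emeasure_space_1)
  moreover have "ennreal (1/2) < 1"
    by (subst ennreal_1[symmetric], subst ennreal_less_iff) auto
  ultimately have "\<forall>\<^sub>F n in sequentially. ennreal (1/2) < emeasure (PiM IB2 N) (A n)"
    by (rule order_tendstoD)
  then obtain K where K: "ennreal (1/2) < emeasure (PiM IB2 N) (A K)" by (auto simp: eventually_sequentially)
  show ?thesis
  proof (rule exI[of _ "\<kappa> / 2"], intro conjI exI[of _ "R1 * exp (a * real K)"] allI impI)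
    show "\<kappa> / 2 > 0" using kap by simp
    fix c assume c: "R1 * exp (a * real K) \<le> cmod c"
    define h where "h s = ennreal (1 - cos (Re (c * exp (- lam * complex_of_real s))))" for s
    have hm[measurable]: "h \<in> borel_measurable borel" unfolding h_def by measurable
    have inner: "(\<integral>\<^sup>+ x. h (Re x + r) \<partial>N (Inr 1)) =
      (\<integral>\<^sup>+ s. ennreal (exponential_density 1 s * (1 - cos (Re ((c * exp (- lam * complex_of_real r)) * exp (- lam * complex_of_real s))))) \<partial>lborel)" for r
    proof -
      have j1: "(1::nat) \<in> {1..m-1}" using m2 by simp
      have NX: "N (Inr 1) = distr M borel (\<lambda>\<omega>. complex_of_real (\<tau> 1 \<omega>))"
        using j1 by (simp add: N_def X_def II_def IB_def)
      have "(\<integral>\<^sup>+ x. h (Re x + r) \<partial>N (Inr 1)) = (\<integral>\<^sup>+ \<omega>. h (\<tau> 1 \<omega> + r) \<partial>M)"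
        unfolding NX by (subst nn_integral_distr) (use j1 in auto)
      also have "\<dots> = (\<integral>\<^sup>+ s. ennreal (exponential_density (real 1) s) * h (s + r) \<partial>lborel)"
        using distributed_nn_integral[OF tau[OF j1], of "\<lambda>s. h (s + r)"] by simp
      also have "\<dots> = (\<integral>\<^sup>+ s. ennreal (exponential_density 1 s * (1 - cos (Re ((c * exp (- lam * complex_of_real r)) * exp (- lam * complex_of_real s))))) \<partial>lborel)"
      proof (rule nn_integral_cong)
        fix s :: real
        have eqc: "c * exp (- lam * complex_of_real (s + r)) = (c * exp (- lam * complex_of_real r)) * exp (- lam * complex_of_real s)"
          by (simp add: exp_add[symmetric] algebra_simps)
        have d0: "0 \<le> exponential_density 1 s" by (simp add: exponential_density_def)
        have c0: "0 \<le> 1 - cos (Re ((c * exp (- lam * complex_of_real r)) * exp (- lam * complex_of_real s)))" by simp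
        show "ennreal (exponential_density (real 1) s) * h (s + r) = ennreal (exponential_density 1 s * (1 - cos (Re ((c * exp (- lam * complex_of_real r)) * exp (- lam * complex_of_real s)))))"
          unfolding h_def eqc using ennreal_mult[OF d0 c0] by simp
      qed
      finally show ?thesis .
    qed
    have "(\<integral>\<^sup>+ s. h s \<partial>P) = (\<integral>\<^sup>+ y. h (S y) \<partial>PiM IB N)" by (rule nn_T) simp
    also have "\<dots> = (\<integral>\<^sup>+ y'. \<integral>\<^sup>+ x. h (S (y'(Inr 1 := x))) \<partial>N (Inr 1) \<partial>PiM IB2 N)"
      unfolding IB_ins
      by (rule product_sigma_finite.product_nn_integral_insert[OF psf IB2_fin notin])
         (rule measurable_compose[OF S_meas_J hm], auto simp: IB_ins)
    also have "\<dots> = (\<integral>\<^sup>+ y'. \<integral>\<^sup>+ x. h (Re x + S2 y') \<partial>N (Inr 1) \<partial>PiM IB2 N)"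
      by (simp only: S_upd)
    also have "\<dots> \<ge> (\<integral>\<^sup>+ y'. ennreal \<kappa> * indicator (A K) y' \<partial>PiM IB2 N)"
    proof (rule nn_integral_mono)
      fix y' assume "y' \<in> space (PiM IB2 N)"
      show "ennreal \<kappa> * indicator (A K) y' \<le> (\<integral>\<^sup>+ x. h (Re x + S2 y') \<partial>N (Inr 1))"
      proof (cases "y' \<in> A K")
        case True
        then have SK: "S2 y' \<le> real K" by (simp add: A_def)
        have "R1 \<le> cmod c * exp (- a * real K)"
          using c by (simp add: exp_minus field_simps)
        also have "\<dots> \<le> cmod c * exp (- a * S2 y')"
          using SK a by (intro mult_left_mono) auto
        also have "\<dots> = cmod (c * exp (- lam * complex_of_real (S2 y')))"
          by (simp add: norm_mult a_def)
        finally have "ennreal \<kappa> \<le> (\<integral>\<^sup>+ x. h (Re x + S2 y') \<partial>N (Inr 1))"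
          unfolding inner by (rule osc)
        then show ?thesis using True by simp
      qed simp
    qed
    also have "(\<integral>\<^sup>+ y'. ennreal \<kappa> * indicator (A K) y' \<partial>PiM IB2 N) = ennreal \<kappa> * emeasure (PiM IB2 N) (A K)"
      by (rule nn_integral_cmult_indicator[OF Asets])
    finally have ge: "ennreal \<kappa> * emeasure (PiM IB2 N) (A K) \<le> (\<integral>\<^sup>+ s. h s \<partial>P)" .
    have "ennreal (\<kappa> / 2) = ennreal \<kappa> * ennreal (1/2)"
      by (subst ennreal_mult[symmetric]) (use kap in auto)
    also have "\<dots> \<le> ennreal \<kappa> * emeasure (PiM IB2 N) (A K)"
      using K by (intro mult_left_mono) auto
    finally show "ennreal (\<kappa> / 2) \<le> (\<integral>\<^sup>+ s. ennreal (1 - cos (Re (c * exp (- lam * complex_of_real s)))) \<partial>P)"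
      using ge unfolding h_def by simp
  qed
qed


lemma H3: "\<not> (\<exists>c. AE z in \<mu>. z = c)"
proof
  assume "\<exists>c. AE z in \<mu>. z = c"
  then obtain c where c: "AE z in \<mu>. z = c" by blast
  interpret U: prob_space \<mu> by (rule prob_mu)
  have mmu: "borel_measurable \<mu> = borel_measurable borel" by (rule measurable_cong_sets[OF sets_mu refl])
  have "(LINT z|\<mu>. z) = (LINT z|\<mu>. c)" by (rule integral_cong_AE) (use c in \<open>auto simp: mmu\<close>)
  then have Ec: "(LINT z|\<mu>. z) = c" by (simp add: U.prob_space)
  then have c0: "c \<noteq> 0" using EZ by (simp add: EZ_mu)
  have AW: "AE \<omega> in M. W \<omega> = c" using c unfolding mu_W by (rule AE_distrD[rotated]) simp
  have AZ: "AE \<omega> in M. Zs j \<omega> = c" if j: "j \<in> {1..m}" for j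
    using c unfolding \<mu>_def Zsd[OF j, symmetric] by (rule AE_distrD[rotated]) (use Zsm[OF j] in simp)
  have "AE \<omega> in M. \<forall>j\<in>{1..m}. Zs j \<omega> = c" by (rule AE_finite_allI) (use AZ in auto)
  with AW have AT: "AE \<omega> in M. T \<omega> = ln (real m) / Re lam"
  proof eventually_elim
    fix \<omega> assume W: "W \<omega> = c" and Zc: "\<forall>j\<in>{1..m}. Zs j \<omega> = c"
    have "(\<Sum>j=1..m. Zs j \<omega>) = of_nat m * c" using Zc by simp
    then have "exp (- lam * complex_of_real (T \<omega>)) * (of_nat m * c) = c" using W by (simp add: W_def)
    then have "(exp (- lam * complex_of_real (T \<omega>)) * of_nat m) * c = 1 * c"
      by (simp only: mult.assoc mult_1)
    then have "exp (- lam * complex_of_real (T \<omega>)) * of_nat m = 1"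
      using mult_right_cancel[OF c0] by blast
    then have "cmod (exp (- lam * complex_of_real (T \<omega>)) * of_nat m) = cmod (1::complex)" by (rule arg_cong)
    then have "cmod (exp (- lam * complex_of_real (T \<omega>))) * real m = 1"
      by (simp only: norm_mult norm_of_nat norm_one)
    then have "exp (- Re lam * T \<omega>) * real m = 1" by simp
    then have "exp (- Re lam * T \<omega>) = exp (- ln (real m))" using m2 by (simp add: exp_minus field_simps)
    then have "Re lam * T \<omega> = ln (real m)" by simp
    then show "T \<omega> = ln (real m) / Re lam" using apos by (simp add: field_simps)
  qed
  define K0 where "K0 = ln (real m) / Re lam"
  have AP: "AE s in P. s = K0"
    unfolding P_def K0_def by (subst AE_distr_iff) (use AT in auto)
  obtain \<kappa> R0 where kap: "\<kappa> > 0" and H: "\<And>c. R0 \<le> cmod c \<Longrightarrow>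
    ennreal \<kappa> \<le> (\<integral>\<^sup>+ s. ennreal (1 - cos (Re (c * exp (- lam * complex_of_real s)))) \<partial>P)"
    using H2 by blast
  obtain n :: nat where n: "R0 \<le> 2 * pi * real n" using real_arch_simple[of "R0 / (2 * pi)"]
    by (auto simp: field_simps)
  define c' where "c' = complex_of_real (2 * pi * real n) * exp (lam * complex_of_real K0)"
  have "R0 \<le> 2 * pi * real n * exp (Re lam * K0)"
  proof -
    have "1 \<le> exp (Re lam * K0)" using m2 apos by (simp add: K0_def)
    from mult_left_mono[OF this, of "2 * pi * real n"]
    have "2 * pi * real n \<le> 2 * pi * real n * exp (Re lam * K0)" by simp
    then show ?thesis using n by linarith
  qed
  also have "\<dots> = cmod c'" by (simp add: c'_def norm_mult)
  finally have "ennreal \<kappa> \<le> (\<integral>\<^sup>+ s. ennreal (1 - cos (Re (c' * exp (- lam * complex_of_real s)))) \<partial>P)"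
    by (rule H)
  also have "\<dots> = (\<integral>\<^sup>+ s. 0 \<partial>P)"
  proof (rule nn_integral_cong_AE)
    show "AE s in P. ennreal (1 - cos (Re (c' * exp (- lam * complex_of_real s)))) = 0"
      using AP
    proof eventually_elim
      fix s assume "s = K0"
      then have "c' * exp (- lam * complex_of_real s) = complex_of_real (2 * pi * real n)"
        by (simp add: c'_def mult.assoc exp_add[symmetric])
      then show "ennreal (1 - cos (Re (c' * exp (- lam * complex_of_real s)))) = 0"
        using cos_int_2pin[of "int n"] by (simp add: mult.commute)
    qed
  qed
  finally show False using kap by simp
qed


lemma conclusion:
  "((\<lambda>r. Sup {cmod (LINT \<omega>|M. exp (\<i> * complex_of_real (cinner t (Z \<omega>)))) | t. cmod t = r}) \<longlongrightarrow> 0) at_top"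
proof -
  obtain \<kappa> R0 where kap: "\<kappa> > 0" and H: "\<And>c. R0 \<le> cmod c \<Longrightarrow>
    ennreal \<kappa> \<le> (\<integral>\<^sup>+ s. ennreal (1 - cos (Re (c * exp (- lam * complex_of_real s)))) \<partial>P)"
    using H2 by blast
  have lim: "((\<lambda>r. Sup {cmod (chf \<mu> t) | t. cmod t = r}) \<longlongrightarrow> 0) at_top"
    by (rule abstract_main[OF prob_mu sets_mu prob_P sets_P H1 m2 apos kap H H3])
  have eq: "chf \<mu> t = (LINT \<omega>|M. exp (\<i> * complex_of_real (cinner t (Z \<omega>))))" for t
    unfolding chf_def \<mu>_def
    by (rule Bochner_Integration.integral_distr[of Z M borel "\<lambda>z. exp (\<i> * complex_of_real (cinner t z))"]) (auto intro: Zm)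
  show ?thesis using lim by (simp add: eq)
qed

end


theorem lemma7p3:
  fixes M :: "'a measure" and m :: nat and lam :: complex
    and Z :: "'a \<Rightarrow> complex" and Zs :: "nat \<Rightarrow> 'a \<Rightarrow> complex"
    and \<tau> :: "nat \<Rightarrow> 'a \<Rightarrow> real" and T :: "'a \<Rightarrow> real"
  assumes "prob_space M"
    and "m \<ge> 2"
    and "lam \<noteq> 1" and "Re lam > 0"
    and "\<And>j. j \<in> {1..m-1} \<Longrightarrow> distributed M lborel (\<tau> j) (exponential_density (real j))"
    and "\<And>\<omega>. T \<omega> = (\<Sum>j=1..m-1. \<tau> j \<omega>)"
    and "Z \<in> borel_measurable M"
    and "integrable M Z"
    and "integral\<^sup>L M Z \<noteq> 0"
    and "\<And>j. j \<in> {1..m} \<Longrightarrow> Zs j \<in> borel_measurable M"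
    and "\<And>j. j \<in> {1..m} \<Longrightarrow> distr M borel (Zs j) = distr M borel Z"
    and "prob_space.indep_vars M (\<lambda>_. borel)
           (\<lambda>i. case i of Inl j \<Rightarrow> Zs j | Inr j \<Rightarrow> (\<lambda>\<omega>. complex_of_real (\<tau> j \<omega>)))
           (Inl ` {1..m} \<union> Inr ` {1..m-1})"
    and "distr M borel Z =
         distr M borel (\<lambda>\<omega>. exp (- lam * complex_of_real (T \<omega>)) * (\<Sum>j=1..m. Zs j \<omega>))"
  shows "((\<lambda>r. Sup {cmod (LINT \<omega>|M. exp (\<i> * complex_of_real (cinner t (Z \<omega>)))) | t. cmod t = r})
           \<longlongrightarrow> 0) at_top"
proof -
  interpret L7 M m lam Z Zs \<tau> T
    using assms by (rule L7.intro)
  show ?thesis by (rule conclusion)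
qed

end
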